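(* Let $\alpha>\tfrac12$ and let $\alpha_1,\gamma_1,T_{\rm p}$ be: $(\alpha_1,\gamma_1)=(\tfrac12\alpha+\tfrac14,\tfrac32\alpha-\tfrac14)$, $T_{\rm p}=\tfrac{2\alpha-1}{4}\log m$ if $\tfrac12<\alpha\le\tfrac32$; $(\alpha_1,\gamma_1)=(1,2)$, $T_{\rm p}=(\alpha-1)\log m$ if $\alpha>\tfrac32$. Let $T_1=\inf\{t\ge0: q_{\max}(t)\ge m^{-\alpha_1}\log m \text{ or } r_{\max}(t)\ge m^{-\gamma_1}(\log m)^3\}$. Then for every $\delta\in(0,1)$ there exist $M$, $C$ (independent of $m$) such that for all $m\ge M$, with probability at least $1-\delta$ over the initialization, for all $0\le t\le\min\{T_{\rm p},T_1\}$ and all $i\in\{2,\dots,d\}$, $$\Big(\sum_{k=1}^m (w_k^i(t))^2\Big)^{1/2}\le C\max\Big\{\frac{1}{m^{\frac{2\alpha-1}{2}}},\ \frac{(\log m)^5}{m^{5/2}}\Big\}.$$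
   Context: Fix integers $d\ge2$, $m\ge2$. Network $f_\theta(x)=\sum_{k=1}^m a_k\sigma(w_k^{T}x)$ with $\theta=(a_k,w_k)_{k=1}^m$, $w_k=(w_k^1,\dots,w_k^d)^T$; risk $R(\theta)=\tfrac12\int(f_\theta-f)^2\rho\,dx$, where $\rho$ is a compactly supported probability density on $\mathbb R^d$ with $\int x_i^2\rho=1$, $\int x_ix_j\rho=0$ ($i\neq j$); $f$ is bounded on $\mathrm{supp}\,\rho$ with $\int f(x)x\rho(x)dx=(1,0,\dots,0)^T$; $\sigma$ is $C^3$-type (three times differentiable) with $\sigma(0)=0,\sigma'(0)=1,\sigma''(0)=0$, $|\sigma'''|\le C_{\rm L}$. Initialization: independent $a_k(0)\sim N(0,m^{-2\alpha})$, $w_k(0)\sim N(0,m^{-2\alpha}I_d)$; $\theta(t)$ solves $\dot\theta=-\nabla R(\theta)$. $q_{\max}(t)=\max_{k,i}\{|a_k(t)|,|w_k^i(t)|\}$. Linearized trajectories: $\tilde a_k(t)=\tfrac12(a_k(0)+w_k^1(0))e^t+\tfrac12(a_k(0)-w_k^1(0))e^{-t}$, $\tilde w_k^1(t)=\tfrac12(a_k(0)+w_k^1(0))e^t-\tfrac12(a_k(0)-w_k^1(0))e^{-t}$; $r_{\max}(t)=\max_k\{|a_k(t)-\tilde a_k(t)|+|w_k^1(t)-\tilde w_k^1(t)|\}$. $\log$ is natural. *)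

theory Defs
  imports "HOL-Probability.Probability"
begin

text \<open>Neurons are indexed by k in {1..m}; input coordinates by the finite type 'n
  (so d = CARD('n)); the distinguished first coordinate is j0 :: 'n.\<close>

definition dotp :: "('n::finite \<Rightarrow> real) \<Rightarrow> real^'n \<Rightarrow> real" where
  "dotp v x = (\<Sum>j\<in>UNIV. v j * x $ j)"

definition net :: "(real \<Rightarrow> real) \<Rightarrow> nat \<Rightarrow> (nat \<Rightarrow> real) \<Rightarrow> (nat \<Rightarrow> 'n::finite \<Rightarrow> real)
    \<Rightarrow> real^'n \<Rightarrow> real" where
  "net \<sigma> m a w x = (\<Sum>k=1..m. a k * \<sigma> (dotp (w k) x))"

definition risk :: "(real \<Rightarrow> real) \<Rightarrow> (real^'n::finite \<Rightarrow> real) \<Rightarrow> (real^'n \<Rightarrow> real) \<Rightarrow> nat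
    \<Rightarrow> (nat \<Rightarrow> real) \<Rightarrow> (nat \<Rightarrow> 'n \<Rightarrow> real) \<Rightarrow> real" where
  "risk \<sigma> \<rho> f m a w = 1/2 * (\<integral>x. (net \<sigma> m a w x - f x)^2 * \<rho> x \<partial>lborel)"

definition grad_flow :: "(real \<Rightarrow> real) \<Rightarrow> (real^'n::finite \<Rightarrow> real) \<Rightarrow> (real^'n \<Rightarrow> real) \<Rightarrow> nat
    \<Rightarrow> real \<Rightarrow> (real \<Rightarrow> nat \<Rightarrow> real) \<Rightarrow> (real \<Rightarrow> nat \<Rightarrow> 'n \<Rightarrow> real) \<Rightarrow> bool" where
  "grad_flow \<sigma> \<rho> f m T a w \<longleftrightarrow>
    (\<forall>t\<in>{0..<T}. \<forall>k\<in>{1..m}.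
      ((\<lambda>s. a s k) has_real_derivative
          - deriv (\<lambda>u. risk \<sigma> \<rho> f m ((a t)(k := u)) (w t)) (a t k)) (at t within {0..<T})
      \<and> (\<forall>i. ((\<lambda>s. w s k i) has_real_derivative
          - deriv (\<lambda>u. risk \<sigma> \<rho> f m (a t) ((w t)(k := (w t k)(i := u)))) (w t k i))
            (at t within {0..<T})))"

text \<open>Initialization law: a_k(0) ~ N(0, m^(-2 alpha)), w_k(0) ~ N(0, m^(-2 alpha) I_d), all
  independent (normal_density takes the standard deviation m^(-alpha)).\<close>
definition init_measure :: "nat \<Rightarrow> real \<Rightarrow> ((nat \<Rightarrow> real) \<times> (nat \<Rightarrow> 'n::finite \<Rightarrow> real)) measure" where
  "init_measure m \<alpha> =
     pair_measure
       (PiM {1..m} (\<lambda>k. density lborel (normal_density 0 (real m powr (-\<alpha>)))))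
       (PiM {1..m} (\<lambda>k. PiM UNIV (\<lambda>i. density lborel (normal_density 0 (real m powr (-\<alpha>))))))"

definition qmax :: "nat \<Rightarrow> (nat \<Rightarrow> real) \<Rightarrow> (nat \<Rightarrow> 'n::finite \<Rightarrow> real) \<Rightarrow> real" where
  "qmax m a w = Max ({\<bar>a k\<bar> | k. k \<in> {1..m}} \<union> {\<bar>w k i\<bar> | k i. k \<in> {1..m}})"

definition lin_a :: "(nat \<Rightarrow> real) \<Rightarrow> (nat \<Rightarrow> 'n \<Rightarrow> real) \<Rightarrow> 'n \<Rightarrow> nat \<Rightarrow> real \<Rightarrow> real" where
  "lin_a a0 w0 j0 k t = 1/2 * (a0 k + w0 k j0) * exp t + 1/2 * (a0 k - w0 k j0) * exp (-t)"

definition lin_w :: "(nat \<Rightarrow> real) \<Rightarrow> (nat \<Rightarrow> 'n \<Rightarrow> real) \<Rightarrow> 'n \<Rightarrow> nat \<Rightarrow> real \<Rightarrow> real" where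
  "lin_w a0 w0 j0 k t = 1/2 * (a0 k + w0 k j0) * exp t - 1/2 * (a0 k - w0 k j0) * exp (-t)"

definition rmax :: "nat \<Rightarrow> 'n \<Rightarrow> (real \<Rightarrow> nat \<Rightarrow> real) \<Rightarrow> (real \<Rightarrow> nat \<Rightarrow> 'n \<Rightarrow> real) \<Rightarrow> real \<Rightarrow> real" where
  "rmax m j0 a w t = Max {\<bar>a t k - lin_a (a 0) (w 0) j0 k t\<bar> + \<bar>w t k j0 - lin_w (a 0) (w 0) j0 k t\<bar>
                          | k. k \<in> {1..m}}"

definition alpha1 :: "real \<Rightarrow> real" where
  "alpha1 \<alpha> = (if \<alpha> \<le> 3/2 then \<alpha>/2 + 1/4 else 1)"

definition gamma1 :: "real \<Rightarrow> real" where
  "gamma1 \<alpha> = (if \<alpha> \<le> 3/2 then 3/2*\<alpha> - 1/4 else 2)"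

definition Tp :: "real \<Rightarrow> nat \<Rightarrow> real" where
  "Tp \<alpha> m = (if \<alpha> \<le> 3/2 then (2*\<alpha> - 1)/4 * ln (real m) else (\<alpha> - 1) * ln (real m))"

text \<open>T_1 (infimum over the existence interval [0,T) of the trajectory; inf of empty set = +infinity).\<close>
definition T1 :: "real \<Rightarrow> nat \<Rightarrow> 'n::finite \<Rightarrow> real \<Rightarrow> (real \<Rightarrow> nat \<Rightarrow> real) \<Rightarrow> (real \<Rightarrow> nat \<Rightarrow> 'n \<Rightarrow> real) \<Rightarrow> ereal" where
  "T1 \<alpha> m j0 T a w = Inf (ereal ` {t. 0 \<le> t \<and> t < T \<and>
      (qmax m (a t) (w t) \<ge> real m powr (- alpha1 \<alpha>) * ln (real m)
       \<or> rmax m j0 a w t \<ge> real m powr (- gamma1 \<alpha>) * (ln (real m))^3)})"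

end

theory Submission
  imports Defs "HOL-Real_Asymp.Real_Asymp"
begin


lemma normal_sq_nn:
  assumes s: "s > 0"
  shows "(\<integral>\<^sup>+ v. ennreal (v^2) \<partial>density lborel (normal_density 0 s)) = ennreal (s^2)"
proof -
  have int: "integrable lborel (\<lambda>v. normal_density 0 s v * v^2)"
    using integrable_normal_moment[where k=2 and \<mu>=0 and \<sigma>=s] s by (simp only: diff_zero)
  have ie: "(\<integral>v. normal_density 0 s v * v^2 \<partial>lborel) = s^2"
  proof -
    have eq: "fact (2 * 1) / ((2 / s\<^sup>2)^1 * fact 1) = (s^2::real)"
      by (cases "s = 0") auto
    have "(\<integral>v. normal_density 0 s v * (v-0)^(2*1) \<partial>lborel) = fact (2 * 1) / ((2 / s\<^sup>2)^1 * fact 1)"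
      by (rule integral_normal_moment_even) (use s in simp)
    then show ?thesis unfolding eq by (simp only: diff_zero mult_1_right)
  qed
  have "(\<integral>\<^sup>+ v. ennreal (v^2) \<partial>density lborel (normal_density 0 s))
      = (\<integral>\<^sup>+ v. ennreal (normal_density 0 s v) * ennreal (v^2) \<partial>lborel)"
    by (subst nn_integral_density) auto
  also have "\<dots> = (\<integral>\<^sup>+ v. ennreal (normal_density 0 s v * v^2) \<partial>lborel)"
    by (simp add: ennreal_mult)
  also have "\<dots> = ennreal (s^2)"
    using int ie by (subst nn_integral_eq_integral) auto
  finally show ?thesis .
qed

lemma init_nn:
  fixes m :: nat and \<alpha> :: real and k :: nat and i :: "'n::finite"
  assumes k: "k \<in> {1..m}" and m: "m \<ge> 1"
  shows "(\<integral>\<^sup>+ \<theta>. ennreal ((snd \<theta> k i)^2) \<partial>(init_measure m \<alpha> :: ((nat \<Rightarrow> real) \<times> (nat \<Rightarrow> 'n \<Rightarrow> real)) measure))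
        = ennreal ((real m powr (-\<alpha>))^2)"
proof -
  define G where "G = density lborel (normal_density 0 (real m powr (-\<alpha>)))"
  define N1 where "N1 = PiM {1..m} (\<lambda>k. G)"
  define N2 where "N2 = (PiM {1..m} (\<lambda>k. PiM (UNIV::'n set) (\<lambda>i. G)))"
  have pG: "prob_space G" unfolding G_def by (rule prob_space_normal_density) (use m in simp)
  have pP: "prob_space (PiM (UNIV::'n set) (\<lambda>i. G))" by (rule prob_space_PiM) (use pG in auto)
  have p1: "prob_space N1" unfolding N1_def by (rule prob_space_PiM) (use pG in auto)
  have p2: "prob_space N2" unfolding N2_def by (rule prob_space_PiM) (use pP in auto)
  interpret N2: prob_space N2 by (rule p2)
  interpret N1: prob_space N1 by (rule p1)
  have mk: "(\<lambda>y. y k) \<in> measurable N2 (PiM (UNIV::'n set) (\<lambda>i. G))"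
    unfolding N2_def using k by (rule measurable_component_singleton)
  have im: "init_measure m \<alpha> = N1 \<Otimes>\<^sub>M N2" unfolding init_measure_def N1_def N2_def G_def ..
  have "(\<integral>\<^sup>+ \<theta>. ennreal ((snd \<theta> k i)^2) \<partial>(N1 \<Otimes>\<^sub>M N2))
      = (\<integral>\<^sup>+ x. \<integral>\<^sup>+ y. ennreal ((y k i)^2) \<partial>N2 \<partial>N1)"
  proof (subst N2.nn_integral_fst[symmetric])
    show "(\<lambda>\<theta>. ennreal ((snd \<theta> k i)^2)) \<in> borel_measurable (N1 \<Otimes>\<^sub>M N2)"
    proof -
      have "(\<lambda>y. y k) \<in> measurable N2 (PiM (UNIV::'n set) (\<lambda>i. G))"
        unfolding N2_def using k by (rule measurable_component_singleton)
      moreover have "(\<lambda>z. z i) \<in> measurable (PiM (UNIV::'n set) (\<lambda>i. G)) G"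
        by (rule measurable_component_singleton) simp
      moreover have "(\<lambda>v::real. ennreal (v^2)) \<in> borel_measurable G"
        unfolding G_def by measurable
      ultimately have "(\<lambda>z. ennreal ((z i)^2)) \<in> borel_measurable (PiM (UNIV::'n set) (\<lambda>i. G))"
        using measurable_compose[of "\<lambda>z. z i" _ G "\<lambda>v::real. ennreal (v^2)"] by simp
      with \<open>(\<lambda>y. y k) \<in> measurable N2 (PiM (UNIV::'n set) (\<lambda>i. G))\<close>
      have "(\<lambda>y. ennreal ((y k i)^2)) \<in> borel_measurable N2"
        using measurable_compose[of "\<lambda>y. y k" N2 _ "\<lambda>z. ennreal ((z i)^2)"] by simp
      then show ?thesis by (rule measurable_compose[OF measurable_snd])
    qed
  qed simp
  also have "\<dots> = (\<integral>\<^sup>+ y. ennreal ((y k i)^2) \<partial>N2)"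
    by (simp add: N1.emeasure_space_1)
  also have "(\<integral>\<^sup>+ y. ennreal ((y k i)^2) \<partial>N2) = (\<integral>\<^sup>+ z. ennreal ((z i)^2) \<partial>PiM (UNIV::'n set) (\<lambda>i. G))"
  proof -
    have "distr N2 (PiM (UNIV::'n set) (\<lambda>i. G)) (\<lambda>y. y k) = PiM (UNIV::'n set) (\<lambda>i. G)"
      unfolding N2_def by (rule distr_PiM_component) (use pP k in auto)
    then have "(\<integral>\<^sup>+ z. ennreal ((z i)^2) \<partial>PiM (UNIV::'n set) (\<lambda>i. G))
        = (\<integral>\<^sup>+ z. ennreal ((z i)^2) \<partial>distr N2 (PiM (UNIV::'n set) (\<lambda>i. G)) (\<lambda>y. y k))" by simp
    also have "\<dots> = (\<integral>\<^sup>+ y. ennreal ((y k i)^2) \<partial>N2)"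
      by (subst nn_integral_distr[OF mk]) (auto simp: G_def)
    finally show ?thesis by simp
  qed
  also have "\<dots> = (\<integral>\<^sup>+ v. ennreal (v^2) \<partial>G)"
  proof -
    have "distr (PiM (UNIV::'n set) (\<lambda>i. G)) G (\<lambda>y. y i) = G"
      by (rule distr_PiM_component) (use pG in auto)
    then have "(\<integral>\<^sup>+ v. ennreal (v^2) \<partial>G) = (\<integral>\<^sup>+ v. ennreal (v^2) \<partial>distr (PiM (UNIV::'n set) (\<lambda>i. G)) G (\<lambda>y. y i))"
      by simp
    also have "\<dots> = (\<integral>\<^sup>+ z. ennreal ((z i)^2) \<partial>PiM (UNIV::'n set) (\<lambda>i. G))"
      by (subst nn_integral_distr) (auto simp: G_def)
    finally show ?thesis by simp
  qed
  also have "\<dots> = ennreal ((real m powr (-\<alpha>))^2)" unfolding G_def by (rule normal_sq_nn) (use m in simp)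
  finally show ?thesis using im by simp
qed

lemma init_prob_space: "m \<ge> 1 \<Longrightarrow> prob_space (init_measure m \<alpha> :: ((nat \<Rightarrow> real) \<times> (nat \<Rightarrow> 'n::finite \<Rightarrow> real)) measure)"
  unfolding init_measure_def
  by (intro prob_space_pair prob_space_PiM prob_space_normal_density) auto

lemma init_meas_comp:
  fixes m :: nat and \<alpha> :: real and k :: nat and i :: "'n::finite"
  assumes k: "k \<in> {1..m}"
  shows "(\<lambda>\<theta>. snd \<theta> k i) \<in> borel_measurable (init_measure m \<alpha> :: ((nat \<Rightarrow> real) \<times> (nat \<Rightarrow> 'n \<Rightarrow> real)) measure)"
proof -
  define G where "G = density lborel (normal_density 0 (real m powr (-\<alpha>)))"
  define N1 where "N1 = PiM {1..m} (\<lambda>k. G)"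
  define N2 where "N2 = (PiM {1..m} (\<lambda>k. PiM (UNIV::'n set) (\<lambda>i. G)))"
  have im: "init_measure m \<alpha> = N1 \<Otimes>\<^sub>M N2" unfolding init_measure_def N1_def N2_def G_def ..
  have mk: "(\<lambda>y. y k) \<in> measurable N2 (PiM (UNIV::'n set) (\<lambda>i. G))"
    unfolding N2_def using k by (rule measurable_component_singleton)
  have "(\<lambda>z. z i) \<in> measurable (PiM (UNIV::'n set) (\<lambda>i. G)) G"
    by (rule measurable_component_singleton) simp
  moreover have "(\<lambda>v::real. v) \<in> borel_measurable G"
    unfolding G_def by measurable
  ultimately have "(\<lambda>z. z i) \<in> borel_measurable (PiM (UNIV::'n set) (\<lambda>i. G))"
    by (rule measurable_compose[where f="\<lambda>z. z i" and g="\<lambda>v. v"])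
  then have "(\<lambda>y. y k i) \<in> borel_measurable N2"
    by (rule measurable_compose[OF mk])
  then show ?thesis unfolding im by (rule measurable_compose[OF measurable_snd])
qed


lemma init_event:
  fixes m :: nat and \<alpha> \<delta> :: real
  assumes m: "m \<ge> 1" and \<delta>: "\<delta> > 0"
  shows "\<exists>E\<in>sets (init_measure m \<alpha> :: ((nat \<Rightarrow> real) \<times> (nat \<Rightarrow> 'n::finite \<Rightarrow> real)) measure).
     measure (init_measure m \<alpha>) E \<ge> 1 - \<delta> \<and>
     (\<forall>\<theta>\<in>E. \<forall>i. (\<Sum>k=1..m. (snd \<theta> k i)^2) \<le> real CARD('n) / \<delta> * real m * (real m powr (-\<alpha>))^2)"
proof -
  let ?M = "init_measure m \<alpha> :: ((nat \<Rightarrow> real) \<times> (nat \<Rightarrow> 'n::finite \<Rightarrow> real)) measure"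
  interpret P: prob_space ?M using m by (rule init_prob_space)
  define s where "s = real m powr (-\<alpha>)"
  have s: "s > 0" using m unfolding s_def by simp
  have cm: "\<And>k i. k \<in> {1..m} \<Longrightarrow> (\<lambda>\<theta>. ennreal ((snd \<theta> k i)^2)) \<in> borel_measurable ?M"
    by (rule measurable_compose[OF _ measurable_ennreal], rule borel_measurable_power, rule init_meas_comp)
  define X where "X = (\<lambda>\<theta>::((nat \<Rightarrow> real) \<times> (nat \<Rightarrow> 'n \<Rightarrow> real)). \<Sum>k\<in>{1..m}. \<Sum>i\<in>UNIV. (snd \<theta> k i)^2)"
  have Xm: "X \<in> borel_measurable ?M"
    unfolding X_def
    apply (rule borel_measurable_sum)
    apply (rule borel_measurable_sum)
    apply (rule borel_measurable_power)
    apply (rule init_meas_comp)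
    apply assumption
    done
  have X0: "\<And>\<theta>. X \<theta> \<ge> 0" unfolding X_def by (intro sum_nonneg) auto
  have nn: "(\<integral>\<^sup>+ \<theta>. ennreal (X \<theta>) \<partial>?M) = ennreal (real m * real CARD('n) * s^2)"
  proof -
    have eqX: "\<And>\<theta>::((nat \<Rightarrow> real) \<times> (nat \<Rightarrow> 'n \<Rightarrow> real)). ennreal (X \<theta>) = (\<Sum>k\<in>{1..m}. \<Sum>i\<in>UNIV. ennreal ((snd \<theta> k i)^2))"
    proof -
      fix \<theta> :: "(nat \<Rightarrow> real) \<times> (nat \<Rightarrow> 'n \<Rightarrow> real)"
      have "(\<Sum>k\<in>{1..m}. \<Sum>i\<in>UNIV. ennreal ((snd \<theta> k i)^2)) = (\<Sum>k\<in>{1..m}. ennreal (\<Sum>i\<in>UNIV. (snd \<theta> k i)^2))"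
        by (intro sum.cong refl sum_ennreal) auto
      also have "\<dots> = ennreal (X \<theta>)" unfolding X_def by (intro sum_ennreal sum_nonneg) auto
      finally show "ennreal (X \<theta>) = (\<Sum>k\<in>{1..m}. \<Sum>i\<in>UNIV. ennreal ((snd \<theta> k i)^2))" by simp
    qed
    have "(\<integral>\<^sup>+ \<theta>. ennreal (X \<theta>) \<partial>?M) = (\<integral>\<^sup>+ \<theta>. (\<Sum>k\<in>{1..m}. \<Sum>i\<in>UNIV. ennreal ((snd \<theta> k i)^2)) \<partial>?M)"
      by (simp only: eqX)
    also have "\<dots> = (\<Sum>k\<in>{1..m}. (\<integral>\<^sup>+ \<theta>. (\<Sum>i\<in>UNIV. ennreal ((snd \<theta> k i)^2)) \<partial>?M))"
      by (rule nn_integral_sum) (rule borel_measurable_sum, erule cm)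
    also have "\<dots> = (\<Sum>k\<in>{1..m}. \<Sum>i\<in>UNIV. (\<integral>\<^sup>+ \<theta>. ennreal ((snd \<theta> k i)^2) \<partial>?M))"
      by (intro sum.cong refl nn_integral_sum cm) 
    also have "\<dots> = (\<Sum>k\<in>{1..m}. \<Sum>i\<in>(UNIV::'n set). ennreal (s^2))"
      unfolding s_def by (intro sum.cong refl init_nn m) 
    also have "\<dots> = ennreal (real m * real CARD('n) * s^2)"
      by (simp add: ennreal_of_nat_eq_real_of_nat ennreal_mult mult.assoc)
    finally show ?thesis .
  qed
  have Xi: "integrable ?M X"
    by (rule integrableI_nonneg[OF Xm]) (use X0 nn in auto)
  have XI: "integral\<^sup>L ?M X = real m * real CARD('n) * s^2"
    by (subst integral_eq_nn_integral[OF Xm]) (use X0 nn s in auto)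
  define c where "c = real CARD('n) / \<delta> * real m * s^2"
  have c: "c > 0" unfolding c_def using \<delta> s m by (simp add: zero_less_card_finite)
  define B where "B = {x\<in>space ?M. X x \<ge> c}"
  have Bs: "B \<in> sets ?M" unfolding B_def using Xm by measurable
  have mB: "measure ?M B \<le> \<delta>"
  proof -
    have "measure ?M B \<le> integral\<^sup>L ?M X / c" unfolding B_def
      by (rule integral_Markov_inequality_measure[OF Xi, of "space ?M"]) (use X0 c in auto)
    also have "\<dots> = \<delta>" unfolding XI c_def using \<delta> s m by (simp add: field_simps zero_less_card_finite)
    finally show ?thesis .
  qed
  define E where "E = space ?M - B"
  have Es: "E \<in> sets ?M" unfolding E_def using Bs by auto
  have "measure ?M E = 1 - measure ?M B" unfolding E_def by (rule P.prob_compl[OF Bs])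
  then have mE: "measure ?M E \<ge> 1 - \<delta>" using mB by simp
  have "\<forall>\<theta>\<in>E. \<forall>i. (\<Sum>k=1..m. (snd \<theta> k i)^2) \<le> real CARD('n) / \<delta> * real m * s^2"
  proof (intro ballI allI)
    fix \<theta> i assume "\<theta> \<in> E"
    then have "X \<theta> < c" unfolding E_def B_def by auto
    moreover have "(\<Sum>k=1..m. (snd \<theta> k i)^2) \<le> X \<theta>"
      unfolding X_def by (intro sum_mono member_le_sum) auto
    ultimately show "(\<Sum>k=1..m. (snd \<theta> k i)^2) \<le> real CARD('n) / \<delta> * real m * s^2"
      unfolding c_def by simp
  qed
  then show ?thesis using Es mE unfolding s_def by blast
qed



lemma deriv_bound_0:
  fixes g g' :: "real \<Rightarrow> real"
  assumes d: "\<And>x. (g has_real_derivative g' x) (at x)" and b: "\<And>x. \<bar>x\<bar> \<le> \<bar>z\<bar> \<Longrightarrow> \<bar>g' x\<bar> \<le> B"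
  shows "\<bar>g z - g 0\<bar> \<le> B * \<bar>z\<bar>"
proof (cases "z = 0")
  case True then show ?thesis by simp
next
  case False
  show ?thesis
  proof (cases "z > 0")
    case True
    then obtain \<xi> where \<xi>: "0 < \<xi>" "\<xi> < z" "g z - g 0 = (z - 0) * g' \<xi>"
      using MVT2[of 0 z g g'] d by blast
    have "\<bar>g' \<xi>\<bar> \<le> B" using b \<xi> by simp
    then show ?thesis using \<xi> True by (simp add: abs_mult mult.commute mult_left_mono)
  next
    case False
    then have z: "z < 0" using \<open>z \<noteq> 0\<close> by simp
    then obtain \<xi> where \<xi>: "z < \<xi>" "\<xi> < 0" "g 0 - g z = (0 - z) * g' \<xi>"
      using MVT2[of z 0 g g'] d by blast
    have "\<bar>g' \<xi>\<bar> \<le> B" using b \<xi> by simp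
    then have "\<bar>g 0 - g z\<bar> \<le> B * \<bar>z\<bar>" using \<xi> z by (simp add: abs_mult mult.commute mult_left_mono)
    then show ?thesis by simp
  qed
qed

lemma taylor2:
  fixes \<phi> \<phi>1 \<phi>2 :: "real \<Rightarrow> real"
  assumes d1: "\<And>y. (\<phi> has_real_derivative \<phi>1 y) (at y)"
    and d2: "\<And>y. (\<phi>1 has_real_derivative \<phi>2 y) (at y)"
    and b: "\<And>y. \<bar>y\<bar> \<le> 1 \<Longrightarrow> \<bar>\<phi>2 y\<bar> \<le> K"
    and h: "\<bar>h\<bar> \<le> 1"
  shows "\<bar>\<phi> h - \<phi> 0 - h * \<phi>1 0\<bar> \<le> K * h^2"
proof -
  have l1: "\<bar>\<phi>1 y - \<phi>1 0\<bar> \<le> K * \<bar>y\<bar>" if "\<bar>y\<bar> \<le> 1" for y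
    by (rule deriv_bound_0[OF d2]) (use b that in auto)
  have "\<bar>(\<lambda>y. \<phi> y - \<phi> 0 - y * \<phi>1 0) h - (\<lambda>y. \<phi> y - \<phi> 0 - y * \<phi>1 0) 0\<bar> \<le> (K * \<bar>h\<bar>) * \<bar>h\<bar>"
  proof (rule deriv_bound_0)
    show "\<And>y. ((\<lambda>y. \<phi> y - \<phi> 0 - y * \<phi>1 0) has_real_derivative \<phi>1 y - \<phi>1 0) (at y)"
      using d1 by (auto intro!: derivative_eq_intros)
    fix y :: real assume y: "\<bar>y\<bar> \<le> \<bar>h\<bar>"
    have "K \<ge> 0" using b[of 0] by simp
    then show "\<bar>\<phi>1 y - \<phi>1 0\<bar> \<le> K * \<bar>h\<bar>" using l1[of y] y h
      by (meson mult_left_mono order.trans)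
  qed
  then show ?thesis by (simp add: power2_eq_square abs_mult_self_eq mult.assoc)
qed

lemma half_lemma: "\<bar>p - q - 2 * r\<bar> \<le> c \<Longrightarrow> \<bar>1/2*p - 1/2*q - r\<bar> \<le> c/(2::real)"
  unfolding abs_le_iff by linarith

lemma deriv_from_quad:
  fixes F :: "real \<Rightarrow> real"
  assumes "\<And>h. \<bar>h\<bar> \<le> 1 \<Longrightarrow> \<bar>F (u0 + h) - F u0 - h * D\<bar> \<le> K * h^2"
  shows "(F has_real_derivative D) (at u0)"
proof -
  have "((\<lambda>y. (F y - F u0) / (y - u0) - D) \<longlongrightarrow> 0) (at u0)"
  proof (rule tendsto_0_le[where f="\<lambda>y. y - u0" and K=K])
    show "((\<lambda>y. y - u0) \<longlongrightarrow> 0) (at u0)" by (intro tendsto_eq_intros) auto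
    have "eventually (\<lambda>y. y \<in> ball u0 1 \<and> y \<noteq> u0) (at u0)"
    proof -
      have "eventually (\<lambda>y. y \<in> ball u0 1) (nhds u0)" by (rule eventually_nhds_in_open) auto
      then show ?thesis unfolding eventually_at_filter by (rule eventually_mono) auto
    qed
    then show "eventually (\<lambda>y. norm ((F y - F u0) / (y - u0) - D) \<le> norm (y - u0) * K) (at u0)"
    proof (rule eventually_mono)
      fix y assume y: "y \<in> ball u0 1 \<and> y \<noteq> u0"
      define h where "h = y - u0"
      have h: "\<bar>h\<bar> \<le> 1" "h \<noteq> 0" using y unfolding h_def by (auto simp: dist_real_def)
      have e: "y = u0 + h" unfolding h_def by simp
      have "\<bar>F (u0 + h) - F u0 - h * D\<bar> \<le> K * h^2" by (rule assms(1)[OF h(1)])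
      moreover have "(F (u0 + h) - F u0) / h - D = (F (u0 + h) - F u0 - h * D) / h"
        using h by (simp add: field_simps)
      ultimately have "\<bar>(F (u0 + h) - F u0) / h - D\<bar> \<le> K * h^2 / \<bar>h\<bar>"
        using h by (simp add: abs_divide divide_right_mono)
      also have "\<dots> = \<bar>h\<bar> * K" using h by (cases "h \<ge> 0") (auto simp: field_simps power2_eq_square)
      finally show "norm ((F y - F u0) / (y - u0) - D) \<le> norm (y - u0) * K"
        by (simp add: h_def)
    qed
  qed
  then show ?thesis unfolding has_field_derivative_iff by (rule LIM_zero_cancel)
qed

locale sig =
  fixes \<sigma> \<sigma>1 \<sigma>2 \<sigma>3 :: "real \<Rightarrow> real" and CL :: real
  assumes s1: "\<forall>x. (\<sigma> has_real_derivative \<sigma>1 x) (at x)"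
    and s2: "\<forall>x. (\<sigma>1 has_real_derivative \<sigma>2 x) (at x)"
    and s3: "\<forall>x. (\<sigma>2 has_real_derivative \<sigma>3 x) (at x)"
    and s00: "\<sigma> 0 = 0" and s10: "\<sigma>1 0 = 1" and s20: "\<sigma>2 0 = 0"
    and sL: "\<forall>x. \<bar>\<sigma>3 x\<bar> \<le> CL"
begin

lemma CL0: "CL \<ge> 0" using sL by (meson abs_ge_zero order.trans)

lemma s2_bound: "\<bar>\<sigma>2 z\<bar> \<le> CL * \<bar>z\<bar>"
  using deriv_bound_0[of \<sigma>2 \<sigma>3 z CL] s3 sL s20 by auto

lemma s1_bound: "\<bar>\<sigma>1 z - 1\<bar> \<le> CL * z^2"
proof -
  have "\<bar>\<sigma>1 z - \<sigma>1 0\<bar> \<le> (CL * \<bar>z\<bar>) * \<bar>z\<bar>"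
  proof (rule deriv_bound_0)
    show "\<And>x. (\<sigma>1 has_real_derivative \<sigma>2 x) (at x)" using s2 by auto
    fix x :: real assume "\<bar>x\<bar> \<le> \<bar>z\<bar>"
    then show "\<bar>\<sigma>2 x\<bar> \<le> CL * \<bar>z\<bar>" using s2_bound[of x] CL0 by (meson mult_left_mono order.trans)
  qed
  then show ?thesis using s10 by (simp add: power2_eq_square abs_mult_self_eq mult.assoc)
qed

lemma s0_bound: "\<bar>\<sigma> z - z\<bar> \<le> CL * \<bar>z\<bar>^3"
proof -
  have "\<bar>(\<lambda>x. \<sigma> x - x) z - (\<lambda>x. \<sigma> x - x) 0\<bar> \<le> (CL * z^2) * \<bar>z\<bar>"
  proof (rule deriv_bound_0)
    show "\<And>x. ((\<lambda>x. \<sigma> x - x) has_real_derivative \<sigma>1 x - 1) (at x)"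
      using s1 by (auto intro!: derivative_eq_intros)
    fix x :: real assume "\<bar>x\<bar> \<le> \<bar>z\<bar>"
    then have "x^2 \<le> z^2" by (simp add: abs_le_square_iff)
    then show "\<bar>\<sigma>1 x - 1\<bar> \<le> CL * z^2" using s1_bound[of x] CL0 by (meson mult_left_mono order.trans)
  qed
  then show ?thesis using s00 by (simp add: power2_eq_square power3_eq_cube abs_mult_self_eq mult.assoc abs_mult)
qed

lemma cont_s: "continuous_on UNIV \<sigma>" "continuous_on UNIV \<sigma>1" "continuous_on UNIV \<sigma>2"
  using s1 s2 s3 by (auto intro!: DERIV_isCont continuous_at_imp_continuous_on)

lemma meas_s[measurable]: "\<sigma> \<in> borel_measurable borel" "\<sigma>1 \<in> borel_measurable borel" "\<sigma>2 \<in> borel_measurable borel"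
  using cont_s by (auto intro: borel_measurable_continuous_onI)

lemma bnd_on: 
  assumes "continuous_on UNIV (g::real \<Rightarrow> real)"
  shows "\<exists>B\<ge>0. \<forall>z. \<bar>z\<bar> \<le> Y \<longrightarrow> \<bar>g z\<bar> \<le> B"
proof -
  have "compact (g ` {-\<bar>Y\<bar>..\<bar>Y\<bar>})" by (rule compact_continuous_image) (use assms continuous_on_subset in auto)
  then obtain B where "\<forall>y\<in>g ` {-\<bar>Y\<bar>..\<bar>Y\<bar>}. norm y \<le> B" using compact_imp_bounded bounded_iff by metis
  then have "\<forall>z. \<bar>z\<bar> \<le> Y \<longrightarrow> \<bar>g z\<bar> \<le> max B 0"
  proof (intro allI impI)
    fix z assume "\<bar>z\<bar> \<le> Y" "\<forall>y\<in>g ` {-\<bar>Y\<bar>..\<bar>Y\<bar>}. norm y \<le> B"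
    moreover have "z \<in> {-\<bar>Y\<bar>..\<bar>Y\<bar>}" using \<open>\<bar>z\<bar> \<le> Y\<close> by auto
    ultimately have "norm (g z) \<le> B" by blast
    then show "\<bar>g z\<bar> \<le> max B 0" by simp
  qed
  then show ?thesis by (intro exI[of _ "max B 0"]) auto
qed

end


locale nsetup = sig +
  fixes \<rho> f :: "real^'n::finite \<Rightarrow> real" and j0 :: 'n
  assumes rho_meas: "\<rho> \<in> borel_measurable lborel"
    and rho_nonneg: "\<forall>x. \<rho> x \<ge> 0"
    and rho_int: "integrable lborel \<rho>"
    and rho_prob: "(\<integral>x. \<rho> x \<partial>lborel) = 1"
    and rho_supp: "compact (closure {x. \<rho> x \<noteq> 0})"
    and rho_var: "\<forall>i. (\<integral>x. (x $ i)^2 * \<rho> x \<partial>lborel) = 1"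
    and rho_cov: "\<forall>i j. i \<noteq> j \<longrightarrow> (\<integral>x. x $ i * x $ j * \<rho> x \<partial>lborel) = 0"
    and f_meas: "f \<in> borel_measurable lborel"
    and f_bdd: "bounded (f ` closure {x. \<rho> x \<noteq> 0})"
    and f_corr: "\<forall>i. (\<integral>x. f x * x $ i * \<rho> x \<partial>lborel) = (if i = j0 then 1 else 0)"
begin

lemma RF: "\<exists>R F. R > 0 \<and> F \<ge> 0 \<and> (\<forall>x. \<rho> x \<noteq> 0 \<longrightarrow> (\<forall>j. \<bar>x $ j\<bar> \<le> R) \<and> \<bar>f x\<bar> \<le> F)"
proof -
  obtain R0 where R0: "\<forall>x\<in>closure {x. \<rho> x \<noteq> 0}. norm x \<le> R0"
    using compact_imp_bounded[OF rho_supp] bounded_iff by metis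
  obtain F0 where F0: "\<forall>y\<in>f ` closure {x. \<rho> x \<noteq> 0}. norm y \<le> F0"
    using f_bdd bounded_iff by metis
  have sub: "\<And>x. \<rho> x \<noteq> 0 \<Longrightarrow> x \<in> closure {x. \<rho> x \<noteq> 0}"
    by (meson closure_subset mem_Collect_eq subsetD)
  have "\<forall>x. \<rho> x \<noteq> 0 \<longrightarrow> (\<forall>j. \<bar>x $ j\<bar> \<le> max R0 1) \<and> \<bar>f x\<bar> \<le> max F0 0"
  proof (intro allI impI conjI)
    fix x j assume x: "\<rho> x \<noteq> 0"
    have "\<bar>x $ j\<bar> \<le> norm x" by (rule component_le_norm_cart)
    also have "norm x \<le> R0" using R0 sub[OF x] by blast
    finally show "\<bar>x $ j\<bar> \<le> max R0 1" by simp
  next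
    fix x assume x: "\<rho> x \<noteq> 0"
    have "norm (f x) \<le> F0" using F0 sub[OF x] by blast
    then show "\<bar>f x\<bar> \<le> max F0 0" by simp
  qed
  then show ?thesis by (intro exI[of _ "max R0 1"] exI[of _ "max F0 0"]) auto
qed

lemma int_bound:
  fixes h :: "real^'n \<Rightarrow> real"
  assumes hm: "h \<in> borel_measurable lborel" and hb: "\<And>x. \<rho> x \<noteq> 0 \<Longrightarrow> \<bar>h x\<bar> \<le> B"
  shows "integrable lborel (\<lambda>x. h x * \<rho> x)" "\<bar>\<integral>x. h x * \<rho> x \<partial>lborel\<bar> \<le> B"
proof -
  have ex: "\<exists>x. \<rho> x \<noteq> 0"
  proof (rule ccontr)
    assume "\<not> (\<exists>x. \<rho> x \<noteq> 0)"
    then have "\<rho> = (\<lambda>x. 0)" by auto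
    then show False using rho_prob by simp
  qed
  then have B0: "B \<ge> 0" using hb by (meson abs_ge_zero order.trans)
  have pb: "\<And>x. \<bar>h x * \<rho> x\<bar> \<le> B * \<rho> x"
  proof -
    fix x show "\<bar>h x * \<rho> x\<bar> \<le> B * \<rho> x"
    proof (cases "\<rho> x = 0")
      case True then show ?thesis by simp
    next
      case False then show ?thesis using hb[OF False] rho_nonneg
        by (simp add: abs_mult mult_right_mono)
    qed
  qed
  show i: "integrable lborel (\<lambda>x. h x * \<rho> x)"
  proof (rule Bochner_Integration.integrable_bound[of _ "\<lambda>x. B * \<rho> x"])
    show "integrable lborel (\<lambda>x. B * \<rho> x)" using rho_int by simp
    show "(\<lambda>x. h x * \<rho> x) \<in> borel_measurable lborel" using hm rho_meas by measurable
    show "AE x in lborel. norm (h x * \<rho> x) \<le> norm (B * \<rho> x)"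
      using pb B0 rho_nonneg by (auto simp: abs_mult)
  qed
  have "\<bar>\<integral>x. h x * \<rho> x \<partial>lborel\<bar> \<le> (\<integral>x. \<bar>h x * \<rho> x\<bar> \<partial>lborel)"
    by (rule integral_abs_bound)
  also have "\<dots> \<le> (\<integral>x. B * \<rho> x \<partial>lborel)"
    by (rule integral_mono) (use i rho_int pb in auto)
  also have "\<dots> = B" using rho_prob by simp
  finally show "\<bar>\<integral>x. h x * \<rho> x \<partial>lborel\<bar> \<le> B" .
qed

end


lemma vn_meas[measurable]: "(\<lambda>x::real^'n::finite. x $ j) \<in> borel_measurable borel"
  by (intro borel_measurable_continuous_onI continuous_intros)


lemma dotp_meas[measurable]: "(\<lambda>x. dotp v x) \<in> borel_measurable borel"
  unfolding dotp_def by measurable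

lemma dotp_upd: "dotp (v(i := u)) x = dotp v x + (u - v i) * x $ i"
proof -
  have "dotp (v(i := u)) x = (\<Sum>j\<in>UNIV. v j * x $ j + (if j = i then (u - v i) * x $ i else 0))"
    unfolding dotp_def by (intro sum.cong refl) (auto simp: algebra_simps)
  also have "\<dots> = dotp v x + (u - v i) * x $ i"
    unfolding dotp_def by (simp add: sum.distrib)
  finally show ?thesis .
qed

lemma dotp_bound:
  assumes "\<And>j. \<bar>x $ j\<bar> \<le> R"
  shows "\<bar>dotp v x\<bar> \<le> (\<Sum>j\<in>UNIV. \<bar>v j\<bar>) * R"
proof -
  have "\<bar>dotp v x\<bar> \<le> (\<Sum>j\<in>UNIV. \<bar>v j * x $ j\<bar>)" unfolding dotp_def by (rule sum_abs)
  also have "\<dots> \<le> (\<Sum>j\<in>UNIV. \<bar>v j\<bar> * R)"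
    by (intro sum_mono) (simp add: abs_mult assms mult_left_mono)
  also have "\<dots> = (\<Sum>j\<in>UNIV. \<bar>v j\<bar>) * R" by (simp add: sum_distrib_right)
  finally show ?thesis .
qed

lemma net_upd:
  assumes k: "k \<in> {1..m}"
  shows "net s m a (w(k := v')) x = net s m a w x - a k * s (dotp (w k) x) + a k * s (dotp v' x)"
proof -
  have "net s m a (w(k := v')) x = (\<Sum>l=1..m. a l * s (dotp (w l) x) + (if l = k then a k * s (dotp v' x) - a k * s (dotp (w k) x) else 0))"
    unfolding net_def by (intro sum.cong refl) auto
  also have "\<dots> = net s m a w x - a k * s (dotp (w k) x) + a k * s (dotp v' x)"
    unfolding net_def using k by (simp add: sum.distrib)
  finally show ?thesis .
qed

context sig begin

lemma sig_chain[derivative_intros]: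
  "(g has_real_derivative g') (at x) \<Longrightarrow> ((\<lambda>h. \<sigma> (g h)) has_real_derivative \<sigma>1 (g x) * g') (at x)"
  "(g has_real_derivative g') (at x) \<Longrightarrow> ((\<lambda>h. \<sigma>1 (g h)) has_real_derivative \<sigma>2 (g x) * g') (at x)"
  using DERIV_chain'[of g g' x UNIV \<sigma> "\<sigma>1 (g x)"] DERIV_chain'[of g g' x UNIV \<sigma>1 "\<sigma>2 (g x)"] s1 s2 by auto

lemma net_meas[measurable]: "(\<lambda>x. net \<sigma> m a w x) \<in> borel_measurable borel"
  unfolding net_def by measurable

end


context nsetup begin

lemma fm[measurable]: "f \<in> borel_measurable borel" using f_meas by simp
lemma rm[measurable]: "\<rho> \<in> borel_measurable borel" using rho_meas by simp

lemma risk_deriv: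
  assumes k: "k \<in> {1..m}"
  shows "((\<lambda>u. risk \<sigma> \<rho> f m a (w(k := (w k)(i := u)))) has_real_derivative
          (\<integral>x. (net \<sigma> m a w x - f x) * (a k * \<sigma>1 (dotp (w k) x) * x $ i) * \<rho> x \<partial>lborel)) (at (w k i))"
proof -
  obtain R F where RF': "R > 0" "F \<ge> 0" "\<And>x. \<rho> x \<noteq> 0 \<Longrightarrow> (\<forall>j. \<bar>x$j\<bar> \<le> R) \<and> \<bar>f x\<bar> \<le> F"
    using RF by blast
  define SW where "SW = (\<Sum>l\<in>{1..m}. \<Sum>j\<in>UNIV. \<bar>w l j\<bar>)"
  define Y where "Y = R * SW + R"
  obtain B0 where B0: "B0 \<ge> 0" "\<And>z. \<bar>z\<bar> \<le> Y \<Longrightarrow> \<bar>\<sigma> z\<bar> \<le> B0" using bnd_on[OF cont_s(1), of Y] by blast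
  obtain B1 where B1: "B1 \<ge> 0" "\<And>z. \<bar>z\<bar> \<le> Y \<Longrightarrow> \<bar>\<sigma>1 z\<bar> \<le> B1" using bnd_on[OF cont_s(2), of Y] by blast
  obtain B2 where B2: "B2 \<ge> 0" "\<And>z. \<bar>z\<bar> \<le> Y \<Longrightarrow> \<bar>\<sigma>2 z\<bar> \<le> B2" using bnd_on[OF cont_s(3), of Y] by blast
  define A where "A = \<bar>a k\<bar>"
  define SA where "SA = (\<Sum>l\<in>{1..m}. \<bar>a l\<bar>)"
  define QB where "QB = SA * B0 + 2*A*B0 + F"
  define K where "K = 2*(A*B1*R)^2 + 2*QB*(A*B2*R^2)"
  define Q where "Q = (\<lambda>x h. net \<sigma> m a w x - a k * \<sigma> (dotp (w k) x) + a k * \<sigma> (dotp (w k) x + h * x$i) - f x)"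
  define g where "g = (\<lambda>x. a k * \<sigma>1 (dotp (w k) x) * x $ i)"
  have A0: "A \<ge> 0" "SA \<ge> 0" unfolding A_def SA_def by (auto intro: sum_nonneg)
  have QB0: "QB \<ge> 0" unfolding QB_def using A0 B0 RF' by simp
  have Qeq: "\<And>x h. net \<sigma> m a (w(k := (w k)(i := w k i + h))) x - f x = Q x h"
  proof -
    fix x h
    have "net \<sigma> m a (w(k := (w k)(i := w k i + h))) x = net \<sigma> m a w x - a k * \<sigma> (dotp (w k) x) + a k * \<sigma> (dotp ((w k)(i := w k i + h)) x)"
      by (rule net_upd[OF k])
    moreover have "dotp ((w k)(i := w k i + h)) x = dotp (w k) x + h * x $ i"
      by (simp add: dotp_upd)
    ultimately show "net \<sigma> m a (w(k := (w k)(i := w k i + h))) x - f x = Q x h"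
      unfolding Q_def by simp
  qed
  have riskeq: "\<And>h. risk \<sigma> \<rho> f m a (w(k := (w k)(i := w k i + h))) = 1/2 * (\<integral>x. (Q x h)^2 * \<rho> x \<partial>lborel)"
    unfolding risk_def by (simp only: Qeq)
  have risk0: "risk \<sigma> \<rho> f m a (w(k := (w k)(i := w k i))) = 1/2 * (\<integral>x. (Q x 0)^2 * \<rho> x \<partial>lborel)"
    using riskeq[of 0] by simp
  have Qm[measurable]: "\<And>h. (\<lambda>x. Q x h) \<in> borel_measurable borel" unfolding Q_def by measurable
  have gm[measurable]: "g \<in> borel_measurable borel" unfolding g_def by measurable
  have xb: "\<And>x j. \<rho> x \<noteq> 0 \<Longrightarrow> \<bar>x$j\<bar> \<le> R" using RF' by blast
  have fb: "\<And>x. \<rho> x \<noteq> 0 \<Longrightarrow> \<bar>f x\<bar> \<le> F" using RF' by blast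
  have zl: "\<And>x l. \<rho> x \<noteq> 0 \<Longrightarrow> l \<in> {1..m} \<Longrightarrow> \<bar>dotp (w l) x\<bar> \<le> R * SW"
  proof -
    fix x l assume x: "\<rho> x \<noteq> 0" and l: "l \<in> {1..m}"
    have "\<bar>dotp (w l) x\<bar> \<le> (\<Sum>j\<in>UNIV. \<bar>w l j\<bar>) * R" by (rule dotp_bound) (use xb x in auto)
    also have "(\<Sum>j\<in>UNIV. \<bar>w l j\<bar>) \<le> SW" unfolding SW_def
      by (rule member_le_sum[of l _ "\<lambda>l. \<Sum>j\<in>UNIV. \<bar>w l j\<bar>"]) (use l in \<open>auto intro: sum_nonneg\<close>)
    then have "(\<Sum>j\<in>UNIV. \<bar>w l j\<bar>) * R \<le> SW * R" using RF' by (simp add: mult_right_mono)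
    finally show "\<bar>dotp (w l) x\<bar> \<le> R * SW" by (simp add: mult.commute)
  qed
  have SW0: "SW \<ge> 0" unfolding SW_def by (auto intro: sum_nonneg)
  have zY: "\<And>x l. \<rho> x \<noteq> 0 \<Longrightarrow> l \<in> {1..m} \<Longrightarrow> \<bar>dotp (w l) x\<bar> \<le> Y"
    using zl RF' unfolding Y_def by (meson add_increasing2 less_imp_le order.trans order_refl)
  have zh: "\<And>x h. \<rho> x \<noteq> 0 \<Longrightarrow> \<bar>h\<bar> \<le> 1 \<Longrightarrow> \<bar>dotp (w k) x + h * x$i\<bar> \<le> Y"
  proof -
    fix x and h :: real assume x: "\<rho> x \<noteq> 0" and h: "\<bar>h\<bar> \<le> 1"
    have "\<bar>h * x$i\<bar> \<le> 1 * R" unfolding abs_mult by (rule mult_mono) (use h xb[OF x] in auto)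
    then show "\<bar>dotp (w k) x + h * x$i\<bar> \<le> Y" using zl[OF x k] unfolding Y_def by linarith
  qed
  have netb: "\<And>x. \<rho> x \<noteq> 0 \<Longrightarrow> \<bar>net \<sigma> m a w x\<bar> \<le> SA * B0"
  proof -
    fix x assume x: "\<rho> x \<noteq> 0"
    have "\<bar>net \<sigma> m a w x\<bar> \<le> (\<Sum>l=1..m. \<bar>a l * \<sigma> (dotp (w l) x)\<bar>)" unfolding net_def by (rule sum_abs)
    also have "\<dots> \<le> (\<Sum>l=1..m. \<bar>a l\<bar> * B0)"
      by (intro sum_mono) (auto simp: abs_mult intro!: mult_left_mono B0(2) zY x)
    also have "\<dots> = SA * B0" unfolding SA_def by (simp add: sum_distrib_right)
    finally show "\<bar>net \<sigma> m a w x\<bar> \<le> SA * B0" .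
  qed
  have Qb: "\<And>x h. \<rho> x \<noteq> 0 \<Longrightarrow> \<bar>h\<bar> \<le> 1 \<Longrightarrow> \<bar>Q x h\<bar> \<le> QB"
  proof -
    fix x and h :: real assume x: "\<rho> x \<noteq> 0" and h: "\<bar>h\<bar> \<le> 1"
    have a1: "\<bar>a k * \<sigma> (dotp (w k) x)\<bar> \<le> A * B0" unfolding A_def abs_mult
      by (rule mult_left_mono) (auto intro!: B0(2) zY x k)
    have a2: "\<bar>a k * \<sigma> (dotp (w k) x + h * x$i)\<bar> \<le> A * B0" unfolding A_def abs_mult
      by (rule mult_left_mono) (auto intro!: B0(2) zh x h)
    show "\<bar>Q x h\<bar> \<le> QB" unfolding Q_def QB_def using netb[OF x] a1 a2 fb[OF x] by linarith
  qed
  have tay: "\<And>x h. \<rho> x \<noteq> 0 \<Longrightarrow> \<bar>h\<bar> \<le> 1 \<Longrightarrow>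
      \<bar>(Q x h)^2 - (Q x 0)^2 - h * (2 * Q x 0 * g x)\<bar> \<le> K * h^2"
  proof -
    fix x and h :: real assume x: "\<rho> x \<noteq> 0" and h: "\<bar>h\<bar> \<le> 1"
    define z where "z = dotp (w k) x"
    define c where "c = x $ i"
    have cR: "\<bar>c\<bar> \<le> R" unfolding c_def using xb[OF x] .
    have dQ: "\<And>y. ((\<lambda>h. Q x h) has_real_derivative a k * (\<sigma>1 (z + y * c) * c)) (at y)"
      unfolding Q_def z_def c_def by (auto intro!: derivative_eq_intros)
    have d1: "\<And>y. ((\<lambda>h. (Q x h)^2) has_real_derivative 2 * Q x y * (a k * \<sigma>1 (z + y * c) * c)) (at y)"
      using dQ by (auto intro!: derivative_eq_intros)
    have d2: "\<And>y. ((\<lambda>y. 2 * Q x y * (a k * \<sigma>1 (z + y * c) * c)) has_real_derivative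
        2 * (a k * \<sigma>1 (z + y * c) * c)^2 + 2 * Q x y * (a k * (\<sigma>2 (z + y * c) * c) * c)) (at y)"
      using dQ by (auto intro!: derivative_eq_intros simp: power2_eq_square algebra_simps)
    have b: "\<bar>2 * (a k * \<sigma>1 (z + y * c) * c)^2 + 2 * Q x y * (a k * (\<sigma>2 (z + y * c) * c) * c)\<bar> \<le> K"
      if y: "\<bar>y\<bar> \<le> 1" for y
    proof -
      have zy: "\<bar>z + y * c\<bar> \<le> Y" unfolding z_def c_def by (rule zh[OF x y])
      have e1: "\<bar>a k * \<sigma>1 (z + y * c) * c\<bar> \<le> A * B1 * R" unfolding A_def abs_mult
        by (intro mult_mono) (use B1 zy cR RF' in auto)
      have e1': "(a k * \<sigma>1 (z + y * c) * c)^2 \<le> (A * B1 * R)^2"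
        using power_mono[OF e1, of 2] by simp
      have e2: "\<bar>Q x y * (a k * (\<sigma>2 (z + y * c) * c) * c)\<bar> \<le> QB * (A * B2 * R^2)"
      proof -
        have "\<bar>a k * (\<sigma>2 (z + y * c) * c) * c\<bar> \<le> A * (B2 * R) * R" unfolding A_def abs_mult
          by (intro mult_mono) (use B2 zy cR RF' in auto)
        then have "\<bar>a k * (\<sigma>2 (z + y * c) * c) * c\<bar> \<le> A * B2 * R^2" by (simp add: power2_eq_square mult.assoc)
        then show ?thesis unfolding abs_mult[of "Q x y"]
          by (intro mult_mono) (use Qb[OF x y] QB0 in auto)
      qed
      have "\<bar>2 * (a k * \<sigma>1 (z + y * c) * c)^2 + 2 * Q x y * (a k * (\<sigma>2 (z + y * c) * c) * c)\<bar>
          \<le> 2 * (a k * \<sigma>1 (z + y * c) * c)^2 + 2 * \<bar>Q x y * (a k * (\<sigma>2 (z + y * c) * c) * c)\<bar>"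
        by (rule order.trans[OF abs_triangle_ineq]) (simp add: abs_mult mult.assoc)
      also have "\<dots> \<le> K" unfolding K_def using e1' e2 by linarith
      finally show ?thesis .
    qed
    have "\<bar>(Q x h)^2 - (Q x 0)^2 - h * (2 * Q x 0 * (a k * \<sigma>1 (z + 0 * c) * c))\<bar> \<le> K * h^2"
      by (rule taylor2[where \<phi>="\<lambda>h. (Q x h)^2", OF d1 d2 b h])
    then show "\<bar>(Q x h)^2 - (Q x 0)^2 - h * (2 * Q x 0 * g x)\<bar> \<le> K * h^2"
      unfolding g_def z_def c_def by (simp add: mult.assoc)
  qed
  have I1: "\<And>h. \<bar>h\<bar> \<le> 1 \<Longrightarrow> integrable lborel (\<lambda>x. (Q x h)^2 * \<rho> x)"
  proof -
    fix h :: real assume h: "\<bar>h\<bar> \<le> 1"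
    show "integrable lborel (\<lambda>x. (Q x h)^2 * \<rho> x)"
    proof (rule int_bound(1)[of _ "QB^2"])
      show "(\<lambda>x. (Q x h)^2) \<in> borel_measurable lborel" by simp
      fix x assume x: "\<rho> x \<noteq> 0"
      show "\<bar>(Q x h)^2\<bar> \<le> QB^2" using power_mono[OF Qb[OF x h], of 2] by simp
    qed
  qed
  have gb: "\<And>x. \<rho> x \<noteq> 0 \<Longrightarrow> \<bar>g x\<bar> \<le> A * B1 * R"
  proof -
    fix x assume x: "\<rho> x \<noteq> 0"
    have "\<bar>dotp (w k) x\<bar> \<le> Y" by (rule zY[OF x k])
    then show "\<bar>g x\<bar> \<le> A * B1 * R" unfolding g_def A_def abs_mult
      by (intro mult_mono) (use B1 xb[OF x] RF' in auto)
  qed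
  have I2: "integrable lborel (\<lambda>x. Q x 0 * g x * \<rho> x)"
  proof (rule int_bound(1)[of _ "QB * (A * B1 * R)"])
    show "(\<lambda>x. Q x 0 * g x) \<in> borel_measurable lborel" by simp
    fix x assume x: "\<rho> x \<noteq> 0"
    show "\<bar>Q x 0 * g x\<bar> \<le> QB * (A * B1 * R)" unfolding abs_mult
      by (intro mult_mono) (use Qb[OF x, of 0] gb[OF x] QB0 in auto)
  qed
  have Deq: "(\<integral>x. (net \<sigma> m a w x - f x) * (a k * \<sigma>1 (dotp (w k) x) * x $ i) * \<rho> x \<partial>lborel)
      = (\<integral>x. Q x 0 * g x * \<rho> x \<partial>lborel)"
    unfolding Q_def g_def by simp
  show ?thesis unfolding Deq
  proof (rule deriv_from_quad[where K="K/2"])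
    fix h :: real assume h: "\<bar>h\<bar> \<le> 1"
    have ie: "(\<integral>x. ((Q x h)^2 - (Q x 0)^2 - h * (2 * Q x 0 * g x)) * \<rho> x \<partial>lborel)
       = (\<integral>x. (Q x h)^2 * \<rho> x \<partial>lborel) - (\<integral>x. (Q x 0)^2 * \<rho> x \<partial>lborel) - 2 * h * (\<integral>x. Q x 0 * g x * \<rho> x \<partial>lborel)"
    proof -
      have "(\<integral>x. ((Q x h)^2 - (Q x 0)^2 - h * (2 * Q x 0 * g x)) * \<rho> x \<partial>lborel)
         = (\<integral>x. ((Q x h)^2 * \<rho> x - (Q x 0)^2 * \<rho> x) - (2 * h) * (Q x 0 * g x * \<rho> x) \<partial>lborel)"
        by (simp add: algebra_simps)
      also have "\<dots> = (\<integral>x. ((Q x h)^2 * \<rho> x - (Q x 0)^2 * \<rho> x) \<partial>lborel) - (\<integral>x. (2 * h) * (Q x 0 * g x * \<rho> x) \<partial>lborel)"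
        by (subst Bochner_Integration.integral_diff) (use I1[OF h] I1[of 0] I2 in auto)
      also have "\<dots> = (\<integral>x. (Q x h)^2 * \<rho> x \<partial>lborel) - (\<integral>x. (Q x 0)^2 * \<rho> x \<partial>lborel) - 2 * h * (\<integral>x. Q x 0 * g x * \<rho> x \<partial>lborel)"
        by (subst Bochner_Integration.integral_diff) (use I1[OF h] I1[of 0] I2 in auto)
      finally show ?thesis .
    qed
    have "\<bar>\<integral>x. ((Q x h)^2 - (Q x 0)^2 - h * (2 * Q x 0 * g x)) * \<rho> x \<partial>lborel\<bar> \<le> K * h^2"
      by (rule int_bound(2)) (use tay h in auto)
    then have "\<bar>1/2 * (\<integral>x. (Q x h)^2 * \<rho> x \<partial>lborel) - 1/2 * (\<integral>x. (Q x 0)^2 * \<rho> x \<partial>lborel) - h * (\<integral>x. Q x 0 * g x * \<rho> x \<partial>lborel)\<bar> \<le> K / 2 * h^2"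
      unfolding ie using half_lemma[of _ _ "h * (\<integral>x. Q x 0 * g x * \<rho> x \<partial>lborel)" "K * h^2"]
      by (simp add: mult.assoc)
    then show "\<bar>risk \<sigma> \<rho> f m a (w(k := (w k)(i := w k i + h))) - risk \<sigma> \<rho> f m a (w(k := (w k)(i := w k i))) - h * (\<integral>x. Q x 0 * g x * \<rho> x \<partial>lborel)\<bar> \<le> K / 2 * h^2"
      unfolding riskeq risk0 .
  qed
qed

end


context nsetup begin

lemma ib:
  fixes h :: "real^'n \<Rightarrow> real"
  assumes "h \<in> borel_measurable borel" "\<And>x. \<rho> x \<noteq> 0 \<Longrightarrow> \<bar>h x\<bar> \<le> B"
  shows "integrable lborel (\<lambda>x. h x * \<rho> x)"
  by (rule int_bound(1)) (use assms in auto)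

lemma zint: "(\<integral>x. dotp v x * x $ i * \<rho> x \<partial>lborel) = v i"
proof -
  obtain R F where RF': "R > 0" "F \<ge> 0" "\<And>x. \<rho> x \<noteq> 0 \<Longrightarrow> (\<forall>j. \<bar>x$j\<bar> \<le> R) \<and> \<bar>f x\<bar> \<le> F"
    using RF by blast
  have I: "\<And>j. integrable lborel (\<lambda>x. x $ j * x $ i * \<rho> x)"
  proof -
    fix j
    show "integrable lborel (\<lambda>x. x $ j * x $ i * \<rho> x)"
    proof (rule ib[of _ "R * R"])
      show "(\<lambda>x::real^'n. x $ j * x $ i) \<in> borel_measurable borel" by measurable
      fix x assume x: "\<rho> x \<noteq> 0"
      show "\<bar>x $ j * x $ i\<bar> \<le> R * R" unfolding abs_mult
        by (rule mult_mono) (use RF'(1) RF'(3)[OF x] in auto)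
    qed
  qed
  have "(\<integral>x. dotp v x * x $ i * \<rho> x \<partial>lborel) = (\<integral>x. (\<Sum>j\<in>UNIV. v j * (x $ j * x $ i * \<rho> x)) \<partial>lborel)"
    unfolding dotp_def by (simp add: sum_distrib_right mult.assoc)
  also have "\<dots> = (\<Sum>j\<in>UNIV. (\<integral>x. v j * (x $ j * x $ i * \<rho> x) \<partial>lborel))"
    by (rule Bochner_Integration.integral_sum) (use I in auto)
  also have "\<dots> = (\<Sum>j\<in>UNIV. v j * (if j = i then 1 else 0))"
  proof (intro sum.cong refl)
    fix j
    have "(\<integral>x. v j * (x $ j * x $ i * \<rho> x) \<partial>lborel) = v j * (\<integral>x. x $ j * x $ i * \<rho> x \<partial>lborel)"
      by (rule Bochner_Integration.integral_mult_right_zero)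
    also have "(\<integral>x. x $ j * x $ i * \<rho> x \<partial>lborel) = (if j = i then 1 else 0)"
    proof (cases "j = i")
      case True
      then show ?thesis using rho_var by (simp add: power2_eq_square)
    next
      case False
      then show ?thesis using rho_cov by simp
    qed
    finally show "(\<integral>x. v j * (x $ j * x $ i * \<rho> x) \<partial>lborel) = v j * (if j = i then 1 else 0)" .
  qed
  also have "\<dots> = v i" by (simp add: if_distrib cong: if_cong)
  finally show ?thesis .
qed

end


lemma sum_struct:
  fixes W A D e :: "nat \<Rightarrow> real"
  assumes D: "\<And>k. k \<in> {1..m} \<Longrightarrow> D k = A k * ((\<Sum>l=1..m. A l * W l) + e k)"
    and e: "\<And>k. k \<in> {1..m} \<Longrightarrow> \<bar>e k\<bar> \<le> E"
    and Aq: "\<And>k. k \<in> {1..m} \<Longrightarrow> \<bar>A k\<bar> \<le> q"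
  shows "-(E * (sqrt (real m) * q) * sqrt (\<Sum>k=1..m. (W k)^2)) \<le> (\<Sum>k=1..m. W k * D k)"
proof (cases "m = 0")
  case True then show ?thesis by simp
next
  case False
  then have "1 \<in> {1..m}" by simp
  then have E0: "E \<ge> 0" using e by (meson abs_ge_zero order.trans)
  have q0: "q \<ge> 0" using Aq \<open>1 \<in> {1..m}\<close> by (meson abs_ge_zero order.trans)
  define L where "L = (\<Sum>l=1..m. A l * W l)"
  have "(\<Sum>k=1..m. W k * D k) = (\<Sum>k=1..m. (A k * W k) * L + W k * A k * e k)"
    by (intro sum.cong refl) (simp add: D L_def algebra_simps)
  also have "\<dots> = L * L + (\<Sum>k=1..m. W k * A k * e k)"
    by (simp add: sum.distrib sum_distrib_right[symmetric] L_def)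
  finally have eq: "(\<Sum>k=1..m. W k * D k) = L * L + (\<Sum>k=1..m. W k * A k * e k)" .
  have s1: "\<bar>\<Sum>k=1..m. W k * A k * e k\<bar> \<le> E * (\<Sum>k=1..m. \<bar>W k\<bar> * \<bar>A k\<bar>)"
  proof -
    have "\<bar>\<Sum>k=1..m. W k * A k * e k\<bar> \<le> (\<Sum>k=1..m. \<bar>W k\<bar> * \<bar>A k\<bar> * E)"
      by (rule order.trans[OF sum_abs]) (auto intro!: sum_mono mult_left_mono e simp: abs_mult)
    also have "\<dots> = E * (\<Sum>k=1..m. \<bar>W k\<bar> * \<bar>A k\<bar>)" by (simp add: sum_distrib_left mult_ac)
    finally show ?thesis .
  qed
  have LA: "L2_set A {1..m} \<le> sqrt (real m) * q"
  proof -
    have "(\<Sum>k=1..m. (A k)^2) \<le> (\<Sum>k=1..m. q^2)"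
      by (intro sum_mono) (use Aq power_mono[of _ q 2] in \<open>force simp: abs_le_square_iff[symmetric]\<close>)
    then have "L2_set A {1..m} \<le> sqrt (real m * q^2)" unfolding L2_set_def by simp
    also have "\<dots> = sqrt (real m) * q" using q0 by (simp add: real_sqrt_mult)
    finally show ?thesis .
  qed
  have LW: "L2_set W {1..m} \<ge> 0" unfolding L2_set_def by (auto intro!: sum_nonneg)
  have s2: "(\<Sum>k=1..m. \<bar>W k\<bar> * \<bar>A k\<bar>) \<le> L2_set W {1..m} * (sqrt (real m) * q)"
    using L2_set_mult_ineq[of W A "{1..m}"] mult_left_mono[OF LA LW] by linarith
  have "E * (\<Sum>k=1..m. \<bar>W k\<bar> * \<bar>A k\<bar>) \<le> E * (L2_set W {1..m} * (sqrt (real m) * q))"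
    by (rule mult_left_mono[OF s2 E0])
  with s1 have b: "\<bar>\<Sum>k=1..m. W k * A k * e k\<bar> \<le> E * (sqrt (real m) * q) * sqrt (\<Sum>k=1..m. (W k)^2)"
    unfolding L2_set_def by (simp add: mult_ac)
  show ?thesis unfolding eq using b by (smt (verit) zero_le_square)
qed


context nsetup begin

lemma grad_bound:
  "\<exists>K1\<ge>0. \<forall>m a w q i. i \<noteq> j0 \<longrightarrow> q \<ge> 0 \<longrightarrow> q \<le> 1 \<longrightarrow> real m * q^2 \<le> 1 \<longrightarrow>
     (\<forall>l\<in>{1..m}. \<bar>a l\<bar> \<le> q \<and> (\<forall>j. \<bar>w l j\<bar> \<le> q)) \<longrightarrow>
     -(K1 * q^2 * (sqrt (real m) * q) * sqrt (\<Sum>k=1..m. (w k i)^2)) \<le>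
       (\<Sum>k=1..m. w k i * (\<integral>x. (net \<sigma> m a w x - f x) * (a k * \<sigma>1 (dotp (w k) x) * x $ i) * \<rho> x \<partial>lborel))"
proof -
  obtain R F where RF': "R > 0" "F \<ge> 0" "\<And>x. \<rho> x \<noteq> 0 \<Longrightarrow> (\<forall>j. \<bar>x$j\<bar> \<le> R) \<and> \<bar>f x\<bar> \<le> F"
    using RF by blast
  define d where "d = real CARD('n)"
  have d0: "d \<ge> 0" unfolding d_def by simp
  define K1 where "K1 = CL*d^3*R^4 + (d*R + CL*d^3*R^3 + F) * (CL*d^2*R^3)"
  have K10: "K1 \<ge> 0" unfolding K1_def using CL0 d0 RF' by simp
  have xb: "\<And>x j. \<rho> x \<noteq> 0 \<Longrightarrow> \<bar>x$j\<bar> \<le> R" using RF' by blast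
  have fb: "\<And>x. \<rho> x \<noteq> 0 \<Longrightarrow> \<bar>f x\<bar> \<le> F" using RF' by blast
  show ?thesis
  proof (intro exI[of _ K1] conjI K10 allI impI)
    fix m a and w :: "nat \<Rightarrow> 'n \<Rightarrow> real" and q i
    assume ij: "i \<noteq> j0" and q0: "q \<ge> 0" and q1: "q \<le> 1" and mq: "real m * q^2 \<le> 1"
      and H: "\<forall>l\<in>{1..m}. \<bar>a l\<bar> \<le> q \<and> (\<forall>j. \<bar>w l j\<bar> \<le> q)"
    define Z where "Z = d * q * R"
    have Z0: "Z \<ge> 0" unfolding Z_def using d0 q0 RF' by simp
    have zb: "\<And>x l. \<rho> x \<noteq> 0 \<Longrightarrow> l \<in> {1..m} \<Longrightarrow> \<bar>dotp (w l) x\<bar> \<le> Z"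
    proof -
      fix x l assume x: "\<rho> x \<noteq> 0" and l: "l \<in> {1..m}"
      have "\<bar>dotp (w l) x\<bar> \<le> (\<Sum>j\<in>UNIV. \<bar>w l j\<bar>) * R" by (rule dotp_bound) (use xb x in auto)
      also have "(\<Sum>j\<in>UNIV. \<bar>w l j\<bar>) \<le> (\<Sum>j\<in>(UNIV::'n set). q)" by (intro sum_mono) (use H l in auto)
      then have "(\<Sum>j\<in>UNIV. \<bar>w l j\<bar>) * R \<le> d * q * R" unfolding d_def using RF' by (simp add: mult_right_mono)
      finally show "\<bar>dotp (w l) x\<bar> \<le> Z" unfolding Z_def .
    qed
    have sb: "\<And>y. \<bar>y\<bar> \<le> Z \<Longrightarrow> \<bar>\<sigma> y\<bar> \<le> Z + CL * Z^3"
    proof -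
      fix y :: real assume y: "\<bar>y\<bar> \<le> Z"
      have "\<bar>y\<bar>^3 \<le> Z^3" by (rule power_mono) (use y in auto)
      then have "CL * \<bar>y\<bar>^3 \<le> CL * Z^3" using CL0 by (rule mult_left_mono)
      then show "\<bar>\<sigma> y\<bar> \<le> Z + CL * Z^3" using s0_bound[of y] y by linarith
    qed
    have s1b: "\<And>y. \<bar>y\<bar> \<le> Z \<Longrightarrow> \<bar>\<sigma>1 y - 1\<bar> \<le> CL * Z^2"
    proof -
      fix y :: real assume y: "\<bar>y\<bar> \<le> Z"
      have "y^2 \<le> Z^2" using power_mono[OF y, of 2] by simp
      then show "\<bar>\<sigma>1 y - 1\<bar> \<le> CL * Z^2" using s1_bound[of y] CL0 by (meson mult_left_mono order.trans)
    qed
    have s0b: "\<And>y. \<bar>y\<bar> \<le> Z \<Longrightarrow> \<bar>\<sigma> y - y\<bar> \<le> CL * Z^3"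
    proof -
      fix y :: real assume y: "\<bar>y\<bar> \<le> Z"
      have "\<bar>y\<bar>^3 \<le> Z^3" by (rule power_mono) (use y in auto)
      then show "\<bar>\<sigma> y - y\<bar> \<le> CL * Z^3" using s0_bound[of y] CL0 by (meson mult_left_mono order.trans)
    qed
    define NB where "NB = real m * q * (Z + CL * Z^3)"
    have netb: "\<And>x. \<rho> x \<noteq> 0 \<Longrightarrow> \<bar>net \<sigma> m a w x\<bar> \<le> NB"
    proof -
      fix x assume x: "\<rho> x \<noteq> 0"
      have "\<bar>net \<sigma> m a w x\<bar> \<le> (\<Sum>l=1..m. \<bar>a l * \<sigma> (dotp (w l) x)\<bar>)" unfolding net_def by (rule sum_abs)
      also have "\<dots> \<le> (\<Sum>l=1..m. q * (Z + CL * Z^3))"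
        by (intro sum_mono) (auto simp: abs_mult intro!: mult_mono sb zb x q0 H[rule_format, THEN conjunct1])
      also have "\<dots> = NB" unfolding NB_def by simp
      finally show "\<bar>net \<sigma> m a w x\<bar> \<le> NB" .
    qed
    have NB0: "NB \<ge> 0" unfolding NB_def using q0 Z0 CL0 by simp
    define NI where "NI = (\<integral>x. net \<sigma> m a w x * x $ i * \<rho> x \<partial>lborel)"
    define FI where "FI = (\<integral>x. f x * x $ i * \<rho> x \<partial>lborel)"
    define eps where "eps = (\<lambda>l. \<integral>x. (\<sigma> (dotp (w l) x) - dotp (w l) x) * x $ i * \<rho> x \<partial>lborel)"
    define eta where "eta = (\<lambda>k. \<integral>x. (net \<sigma> m a w x - f x) * ((\<sigma>1 (dotp (w k) x) - 1) * x $ i) * \<rho> x \<partial>lborel)"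
    have FI0: "FI = 0" unfolding FI_def using f_corr ij by simp
    have Jn: "integrable lborel (\<lambda>x. net \<sigma> m a w x * x $ i * \<rho> x)"
    proof (rule ib[of _ "NB * R"])
      show "(\<lambda>x. net \<sigma> m a w x * x $ i) \<in> borel_measurable borel" by measurable
      fix x assume x: "\<rho> x \<noteq> 0"
      show "\<bar>net \<sigma> m a w x * x $ i\<bar> \<le> NB * R" unfolding abs_mult
        by (rule mult_mono) (use netb[OF x] xb[OF x] NB0 in auto)
    qed
    have Jf: "integrable lborel (\<lambda>x. f x * x $ i * \<rho> x)"
    proof (rule ib[of _ "F * R"])
      show "(\<lambda>x. f x * x $ i) \<in> borel_measurable borel" by measurable
      fix x assume x: "\<rho> x \<noteq> 0"
      show "\<bar>f x * x $ i\<bar> \<le> F * R" unfolding abs_mult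
        by (rule mult_mono) (use fb[OF x] xb[OF x] RF' in auto)
    qed
    have etab: "\<And>k. k \<in> {1..m} \<Longrightarrow> integrable lborel (\<lambda>x. (net \<sigma> m a w x - f x) * ((\<sigma>1 (dotp (w k) x) - 1) * x $ i) * \<rho> x)
        \<and> \<bar>eta k\<bar> \<le> (NB + F) * (CL * Z^2 * R)"
    proof -
      fix k assume k: "k \<in> {1..m}"
      have m1: "(\<lambda>x. (net \<sigma> m a w x - f x) * ((\<sigma>1 (dotp (w k) x) - 1) * x $ i)) \<in> borel_measurable lborel" by simp
      have b1: "\<And>x. \<rho> x \<noteq> 0 \<Longrightarrow> \<bar>(net \<sigma> m a w x - f x) * ((\<sigma>1 (dotp (w k) x) - 1) * x $ i)\<bar> \<le> (NB + F) * (CL * Z^2 * R)"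
      proof -
        fix x assume x: "\<rho> x \<noteq> 0"
        have "\<bar>net \<sigma> m a w x - f x\<bar> \<le> NB + F" using netb[OF x] fb[OF x] by linarith
        moreover have "\<bar>(\<sigma>1 (dotp (w k) x) - 1) * x $ i\<bar> \<le> CL * Z^2 * R" unfolding abs_mult
          by (rule mult_mono) (use s1b zb[OF x k] xb[OF x] CL0 in auto)
        ultimately show "\<bar>(net \<sigma> m a w x - f x) * ((\<sigma>1 (dotp (w k) x) - 1) * x $ i)\<bar> \<le> (NB + F) * (CL * Z^2 * R)"
          unfolding abs_mult[of "net \<sigma> m a w x - f x"] by (rule mult_mono) (use NB0 RF' in auto)
      qed
      show "integrable lborel (\<lambda>x. (net \<sigma> m a w x - f x) * ((\<sigma>1 (dotp (w k) x) - 1) * x $ i) * \<rho> x)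
        \<and> \<bar>eta k\<bar> \<le> (NB + F) * (CL * Z^2 * R)"
        unfolding eta_def using int_bound[OF m1 b1] by blast
    qed
    have epsb: "\<And>l. l \<in> {1..m} \<Longrightarrow> integrable lborel (\<lambda>x. (\<sigma> (dotp (w l) x) - dotp (w l) x) * x $ i * \<rho> x)
        \<and> \<bar>eps l\<bar> \<le> CL * Z^3 * R"
    proof -
      fix l assume l: "l \<in> {1..m}"
      have m1: "(\<lambda>x. (\<sigma> (dotp (w l) x) - dotp (w l) x) * x $ i) \<in> borel_measurable lborel" by simp
      have b1: "\<And>x. \<rho> x \<noteq> 0 \<Longrightarrow> \<bar>(\<sigma> (dotp (w l) x) - dotp (w l) x) * x $ i\<bar> \<le> CL * Z^3 * R"
        unfolding abs_mult by (rule mult_mono) (use s0b zb l xb CL0 Z0 in auto)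
      show "integrable lborel (\<lambda>x. (\<sigma> (dotp (w l) x) - dotp (w l) x) * x $ i * \<rho> x) \<and> \<bar>eps l\<bar> \<le> CL * Z^3 * R"
        unfolding eps_def using int_bound[OF m1 b1] by blast
    qed
    have Jz: "\<And>l. integrable lborel (\<lambda>x. dotp (w l) x * x $ i * \<rho> x)"
    proof -
      fix l
      show "integrable lborel (\<lambda>x. dotp (w l) x * x $ i * \<rho> x)"
      proof (rule ib[of _ "((\<Sum>j\<in>UNIV. \<bar>w l j\<bar>) * R) * R"])
        show "(\<lambda>x. dotp (w l) x * x $ i) \<in> borel_measurable borel" by measurable
        fix x assume x: "\<rho> x \<noteq> 0"
        show "\<bar>dotp (w l) x * x $ i\<bar> \<le> ((\<Sum>j\<in>UNIV. \<bar>w l j\<bar>) * R) * R" unfolding abs_mult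
          by (rule mult_mono) (use dotp_bound xb[OF x] RF' in \<open>auto intro: sum_nonneg\<close>)
      qed
    qed
    have NIeq: "NI = (\<Sum>l=1..m. a l * (w l i + eps l))"
    proof -
      have "NI = (\<integral>x. (\<Sum>l=1..m. a l * (dotp (w l) x * x $ i * \<rho> x + (\<sigma> (dotp (w l) x) - dotp (w l) x) * x $ i * \<rho> x)) \<partial>lborel)"
        unfolding NI_def net_def by (intro Bochner_Integration.integral_cong refl) (simp add: sum_distrib_left sum_distrib_right algebra_simps)
      also have "\<dots> = (\<Sum>l=1..m. (\<integral>x. a l * (dotp (w l) x * x $ i * \<rho> x + (\<sigma> (dotp (w l) x) - dotp (w l) x) * x $ i * \<rho> x) \<partial>lborel))"
        by (rule Bochner_Integration.integral_sum) (use Jz epsb in auto)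
      also have "\<dots> = (\<Sum>l=1..m. a l * (w l i + eps l))"
      proof (intro sum.cong refl)
        fix l assume l: "l \<in> {1..m}"
        have "(\<integral>x. a l * (dotp (w l) x * x $ i * \<rho> x + (\<sigma> (dotp (w l) x) - dotp (w l) x) * x $ i * \<rho> x) \<partial>lborel)
            = a l * (\<integral>x. (dotp (w l) x * x $ i * \<rho> x + (\<sigma> (dotp (w l) x) - dotp (w l) x) * x $ i * \<rho> x) \<partial>lborel)"
          by (rule Bochner_Integration.integral_mult_right_zero)
        also have "(\<integral>x. (dotp (w l) x * x $ i * \<rho> x + (\<sigma> (dotp (w l) x) - dotp (w l) x) * x $ i * \<rho> x) \<partial>lborel)
            = (\<integral>x. dotp (w l) x * x $ i * \<rho> x \<partial>lborel) + eps l"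
          unfolding eps_def by (rule Bochner_Integration.integral_add) (use Jz epsb l in auto)
        finally show "(\<integral>x. a l * (dotp (w l) x * x $ i * \<rho> x + (\<sigma> (dotp (w l) x) - dotp (w l) x) * x $ i * \<rho> x) \<partial>lborel) = a l * (w l i + eps l)"
          by (simp add: zint)
      qed
      finally show ?thesis .
    qed
    have Deq: "\<And>k. k \<in> {1..m} \<Longrightarrow> (\<integral>x. (net \<sigma> m a w x - f x) * (a k * \<sigma>1 (dotp (w k) x) * x $ i) * \<rho> x \<partial>lborel)
        = a k * ((\<Sum>l=1..m. a l * w l i) + ((\<Sum>l=1..m. a l * eps l) + eta k))"
    proof -
      fix k assume k: "k \<in> {1..m}"
      have "(\<integral>x. (net \<sigma> m a w x - f x) * (a k * \<sigma>1 (dotp (w k) x) * x $ i) * \<rho> x \<partial>lborel)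
          = (\<integral>x. a k * ((net \<sigma> m a w x * x $ i * \<rho> x - f x * x $ i * \<rho> x) + (net \<sigma> m a w x - f x) * ((\<sigma>1 (dotp (w k) x) - 1) * x $ i) * \<rho> x) \<partial>lborel)"
        by (intro Bochner_Integration.integral_cong refl) (simp add: algebra_simps)
      also have "\<dots> = a k * (\<integral>x. ((net \<sigma> m a w x * x $ i * \<rho> x - f x * x $ i * \<rho> x) + (net \<sigma> m a w x - f x) * ((\<sigma>1 (dotp (w k) x) - 1) * x $ i) * \<rho> x) \<partial>lborel)"
        by (rule Bochner_Integration.integral_mult_right_zero)
      also have "(\<integral>x. ((net \<sigma> m a w x * x $ i * \<rho> x - f x * x $ i * \<rho> x) + (net \<sigma> m a w x - f x) * ((\<sigma>1 (dotp (w k) x) - 1) * x $ i) * \<rho> x) \<partial>lborel)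
          = NI - FI + eta k"
        unfolding NI_def FI_def eta_def
        by (subst Bochner_Integration.integral_add) (use Jn Jf etab[OF k] in auto)
      finally show "(\<integral>x. (net \<sigma> m a w x - f x) * (a k * \<sigma>1 (dotp (w k) x) * x $ i) * \<rho> x \<partial>lborel)
        = a k * ((\<Sum>l=1..m. a l * w l i) + ((\<Sum>l=1..m. a l * eps l) + eta k))"
        unfolding NIeq FI0 by (simp add: algebra_simps sum.distrib)
    qed
    define E where "E = real m * q * (CL * Z^3 * R) + (NB + F) * (CL * Z^2 * R)"
    have eb: "\<And>k. k \<in> {1..m} \<Longrightarrow> \<bar>(\<Sum>l=1..m. a l * eps l) + eta k\<bar> \<le> E"
    proof -
      fix k assume k: "k \<in> {1..m}"
      have "\<bar>\<Sum>l=1..m. a l * eps l\<bar> \<le> (\<Sum>l=1..m. q * (CL * Z^3 * R))"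
      proof (rule order.trans[OF sum_abs], rule sum_mono)
        fix l assume l: "l \<in> {1..m}"
        show "\<bar>a l * eps l\<bar> \<le> q * (CL * Z^3 * R)" unfolding abs_mult
          by (rule mult_mono) (use H l epsb[OF l] q0 in auto)
      qed
      also have "\<dots> = real m * q * (CL * Z^3 * R)" by simp
      finally show "\<bar>(\<Sum>l=1..m. a l * eps l) + eta k\<bar> \<le> E" unfolding E_def using etab[OF k] by linarith
    qed
    have EK: "E \<le> K1 * q^2"
    proof -
      have mq4: "real m * q^4 \<le> q^2"
      proof -
        have "real m * q^4 = (real m * q^2) * q^2" by (simp add: power_def)
        also have "\<dots> \<le> 1 * q^2" by (rule mult_right_mono[OF mq]) simp
        finally show ?thesis by simp
      qed
      have q2: "q^2 \<le> 1" using q0 q1 by (simp add: power_le_one)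
      have t1: "real m * q * (CL * Z^3 * R) = (CL*d^3*R^4) * (real m * q^4)"
        unfolding Z_def by (simp add: power_def algebra_simps)
      have t1': "real m * q * (CL * Z^3 * R) \<le> (CL*d^3*R^4) * q^2"
        unfolding t1 by (rule mult_left_mono[OF mq4]) (use CL0 d0 RF' in simp)
      have t2: "NB = d * R * (real m * q^2) + CL * d^3 * R^3 * (real m * q^4)"
        unfolding NB_def Z_def by (simp add: power_def algebra_simps)
      have "d * R * (real m * q^2) \<le> d * R * 1" by (rule mult_left_mono[OF mq]) (use d0 RF' in simp)
      moreover have "CL * d^3 * R^3 * (real m * q^4) \<le> CL * d^3 * R^3 * 1"
        by (rule mult_left_mono) (use mq4 q2 CL0 d0 RF' in auto)
      ultimately have t2': "NB + F \<le> d*R + CL*d^3*R^3 + F" unfolding t2 by linarith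
      have t3: "CL * Z^2 * R = (CL*d^2*R^3) * q^2" unfolding Z_def by (simp add: power_def algebra_simps)
      have t3': "(NB + F) * (CL * Z^2 * R) \<le> (d*R + CL*d^3*R^3 + F) * ((CL*d^2*R^3) * q^2)"
        unfolding t3 by (rule mult_right_mono[OF t2']) (use CL0 d0 RF' in simp)
      show ?thesis unfolding E_def K1_def using t1' t3' by (simp add: algebra_simps)
    qed
    have main: "-(E * (sqrt (real m) * q) * sqrt (\<Sum>k=1..m. (w k i)^2)) \<le>
       (\<Sum>k=1..m. w k i * (\<integral>x. (net \<sigma> m a w x - f x) * (a k * \<sigma>1 (dotp (w k) x) * x $ i) * \<rho> x \<partial>lborel))"
      by (rule sum_struct[where A=a and e="\<lambda>k. (\<Sum>l=1..m. a l * eps l) + eta k"]) (use Deq eb H in \<open>auto simp: mult.commute\<close>)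
    have "E * (sqrt (real m) * q) * sqrt (\<Sum>k=1..m. (w k i)^2) \<le> K1 * q^2 * (sqrt (real m) * q) * sqrt (\<Sum>k=1..m. (w k i)^2)"
      by (intro mult_right_mono EK) (use q0 in \<open>auto intro: sum_nonneg\<close>)
    then show "-(K1 * q^2 * (sqrt (real m) * q) * sqrt (\<Sum>k=1..m. (w k i)^2)) \<le>
       (\<Sum>k=1..m. w k i * (\<integral>x. (net \<sigma> m a w x - f x) * (a k * \<sigma>1 (dotp (w k) x) * x $ i) * \<rho> x \<partial>lborel))"
      using main by linarith
  qed
qed

end


lemma ode_bound:
  fixes G G' :: "real \<Rightarrow> real"
  assumes d: "\<And>s. 0 \<le> s \<Longrightarrow> s \<le> t \<Longrightarrow> (G has_real_derivative G' s) (at s within {0..<T})"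
    and tT: "t < T" and t0: "0 \<le> t"
    and b: "\<And>s. 0 < s \<Longrightarrow> s < t \<Longrightarrow> G' s \<le> B"
  shows "G t \<le> G 0 + B * t"
proof (cases "t = 0")
  case True then show ?thesis by simp
next
  case False
  then have tp: "0 < t" using t0 by simp
  have cont: "continuous_on {0..t} G"
    unfolding continuous_on_eq_continuous_within
  proof
    fix s assume s: "s \<in> {0..t}"
    have "continuous (at s within {0..<T}) G" using d s by (auto intro: DERIV_continuous)
    then show "continuous (at s within {0..t}) G" by (rule continuous_within_subset) (use tT in auto)
  qed
  have der: "\<And>s. 0 < s \<Longrightarrow> s < t \<Longrightarrow> (G has_derivative (*) (G' s)) (at s)"
  proof -
    fix s :: real assume s: "0 < s" "s < t"
    have "{0<..<T} \<subseteq> interior {0..<T}" by (rule interior_maximal) auto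
    then have "s \<in> interior {0..<T}" using s tT by auto
    then have "at s within {0..<T} = at s" by (rule at_within_interior)
    then have "(G has_real_derivative G' s) (at s)" using d[of s] s by simp
    then show "(G has_derivative (*) (G' s)) (at s)" by (rule has_field_derivative_imp_has_derivative)
  qed
  obtain \<xi> where \<xi>: "0 < \<xi>" "\<xi> < t" "G t - G 0 = (*) (G' \<xi>) (t - 0)"
    using mvt[OF tp cont der] by blast
  have "G' \<xi> * t \<le> B * t" using b[OF \<xi>(1,2)] tp by (simp add: mult_right_mono)
  then show ?thesis using \<xi>(3) by simp
qed

lemma qmax_ge:
  assumes l: "l \<in> {1..m}"
  shows "\<bar>a l\<bar> \<le> qmax m a (w :: nat \<Rightarrow> 'n::finite \<Rightarrow> real)" "\<bar>w l j\<bar> \<le> qmax m a w"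
proof -
  have e: "{\<bar>w k i\<bar> | k i. k \<in> {1..m}} = (\<lambda>(k,i). \<bar>w k i\<bar>) ` ({1..m} \<times> UNIV)" by auto
  have fin: "finite ({\<bar>a k\<bar> | k. k \<in> {1..m}} \<union> {\<bar>w k i\<bar> | k i. k \<in> {1..m}})"
    unfolding e by simp
  show "\<bar>a l\<bar> \<le> qmax m a w" unfolding qmax_def by (rule Max_ge[OF fin]) (use l in blast)
  show "\<bar>w l j\<bar> \<le> qmax m a w" unfolding qmax_def by (rule Max_ge[OF fin]) (use l in blast)
qed


context nsetup begin

lemma traj:
  assumes K1: "K1 \<ge> 0"
    and K1P: "\<forall>m a w q i. i \<noteq> j0 \<longrightarrow> q \<ge> 0 \<longrightarrow> q \<le> 1 \<longrightarrow> real m * q^2 \<le> 1 \<longrightarrow>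
     (\<forall>l\<in>{1..m}. \<bar>a l\<bar> \<le> q \<and> (\<forall>j. \<bar>w l j\<bar> \<le> q)) \<longrightarrow>
     -(K1 * q^2 * (sqrt (real m) * q) * sqrt (\<Sum>k=1..m. (w k i)^2)) \<le>
       (\<Sum>k=1..m. w k i * (\<integral>x. (net \<sigma> m a w x - f x) * (a k * \<sigma>1 (dotp (w k) x) * x $ i) * \<rho> x \<partial>lborel))"
    and gf: "grad_flow \<sigma> \<rho> f m T a w" and ij: "i \<noteq> j0"
    and thr: "thr \<ge> 0" "thr \<le> 1" "real m * thr^2 \<le> 1"
    and t: "0 \<le> t" "t < T"
    and below: "\<And>s. 0 \<le> s \<Longrightarrow> s < t \<Longrightarrow> qmax m (a s) (w s) < thr"
    and eps: "\<epsilon> > 0"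
  shows "sqrt (\<Sum>k=1..m. (w t k i)^2) \<le> sqrt ((\<Sum>k=1..m. (w 0 k i)^2) + \<epsilon>) + K1 * thr^3 * sqrt (real m) * t"
proof -
  define Dw where "Dw = (\<lambda>s k. \<integral>x. (net \<sigma> m (a s) (w s) x - f x) * (a s k * \<sigma>1 (dotp (w s k) x) * x $ i) * \<rho> x \<partial>lborel)"
  have dw: "\<And>s k. s \<in> {0..<T} \<Longrightarrow> k \<in> {1..m} \<Longrightarrow> ((\<lambda>s. w s k i) has_real_derivative - Dw s k) (at s within {0..<T})"
  proof -
    fix s k assume s: "s \<in> {0..<T}" and k: "k \<in> {1..m}"
    have "((\<lambda>s. w s k i) has_real_derivative - deriv (\<lambda>u. risk \<sigma> \<rho> f m (a s) ((w s)(k := (w s k)(i := u)))) (w s k i)) (at s within {0..<T})"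
      using gf s k unfolding grad_flow_def by blast
    moreover have "deriv (\<lambda>u. risk \<sigma> \<rho> f m (a s) ((w s)(k := (w s k)(i := u)))) (w s k i) = Dw s k"
      unfolding Dw_def by (rule DERIV_imp_deriv[OF risk_deriv[OF k]])
    ultimately show "((\<lambda>s. w s k i) has_real_derivative - Dw s k) (at s within {0..<T})" by simp
  qed
  define N2 where "N2 = (\<lambda>s. \<Sum>k=1..m. (w s k i)^2)"
  define G where "G = (\<lambda>s. sqrt (N2 s + \<epsilon>))"
  define G' where "G' = (\<lambda>s. (\<Sum>k=1..m. 2 * w s k i * (- Dw s k)) / (2 * sqrt (N2 s + \<epsilon>)))"
  have N20: "\<And>s. N2 s \<ge> 0" unfolding N2_def by (auto intro: sum_nonneg)
  have dN: "\<And>s. s \<in> {0..<T} \<Longrightarrow> (N2 has_real_derivative (\<Sum>k=1..m. 2 * w s k i * (- Dw s k))) (at s within {0..<T})"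
  proof -
    fix s assume s: "s \<in> {0..<T}"
    show "(N2 has_real_derivative (\<Sum>k=1..m. 2 * w s k i * (- Dw s k))) (at s within {0..<T})"
      unfolding N2_def
    proof (rule DERIV_sum)
      fix k assume k: "k \<in> {1..m}"
      show "((\<lambda>s. (w s k i)^2) has_real_derivative 2 * w s k i * (- Dw s k)) (at s within {0..<T})"
        using DERIV_power[OF dw[OF s k], of 2] by (simp add: mult_ac)
    qed
  qed
  have dG: "\<And>s. 0 \<le> s \<Longrightarrow> s \<le> t \<Longrightarrow> (G has_real_derivative G' s) (at s within {0..<T})"
  proof -
    fix s assume s: "0 \<le> s" "s \<le> t"
    then have sT: "s \<in> {0..<T}" using t by auto
    have pos: "N2 s + \<epsilon> > 0" using N20[of s] eps by linarith
    have "((\<lambda>s. sqrt (N2 s + \<epsilon>)) has_real_derivative (inverse (sqrt (N2 s + \<epsilon>)) / 2) * (\<Sum>k=1..m. 2 * w s k i * (- Dw s k))) (at s within {0..<T})"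
      by (rule DERIV_chain'[where f="\<lambda>s. N2 s + \<epsilon>" and g=sqrt])
         (use dN[OF sT] pos in \<open>auto intro!: derivative_eq_intros DERIV_real_sqrt\<close>)
    then show "(G has_real_derivative G' s) (at s within {0..<T})"
      unfolding G_def G'_def by (simp add: divide_simps mult.commute)
  qed
  have bG: "\<And>s. 0 < s \<Longrightarrow> s < t \<Longrightarrow> G' s \<le> K1 * thr^3 * sqrt (real m)"
  proof -
    fix s assume s: "0 < s" "s < t"
    have H: "\<forall>l\<in>{1..m}. \<bar>a s l\<bar> \<le> thr \<and> (\<forall>j. \<bar>w s l j\<bar> \<le> thr)"
      using qmax_ge[where m=m and a="a s" and w="w s"] below[of s] s by (meson less_eq_real_def order.trans)
    have gb: "-(K1 * thr^2 * (sqrt (real m) * thr) * sqrt (N2 s)) \<le> (\<Sum>k=1..m. w s k i * Dw s k)"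
    proof -
      have imp: "i \<noteq> j0 \<longrightarrow> thr \<ge> 0 \<longrightarrow> thr \<le> 1 \<longrightarrow> real m * thr^2 \<le> 1 \<longrightarrow>
        (\<forall>l\<in>{1..m}. \<bar>a s l\<bar> \<le> thr \<and> (\<forall>j. \<bar>w s l j\<bar> \<le> thr)) \<longrightarrow>
        -(K1 * thr^2 * (sqrt (real m) * thr) * sqrt (\<Sum>k=1..m. (w s k i)^2)) \<le>
       (\<Sum>k=1..m. w s k i * (\<integral>x. (net \<sigma> m (a s) (w s) x - f x) * (a s k * \<sigma>1 (dotp (w s k) x) * x $ i) * \<rho> x \<partial>lborel))"
        using K1P by blast
      show ?thesis using imp ij thr H unfolding N2_def Dw_def by blast
    qed
    have eqs: "(\<Sum>k=1..m. 2 * w s k i * (- Dw s k)) = -2 * (\<Sum>k=1..m. w s k i * Dw s k)"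
      by (simp add: sum_distrib_left sum_negf mult.assoc)
    have pos: "sqrt (N2 s + \<epsilon>) > 0" using N20[of s] eps by simp
    have sq: "sqrt (N2 s) \<le> sqrt (N2 s + \<epsilon>)" using eps by simp
    have "G' s \<le> (2 * (K1 * thr^3 * sqrt (real m)) * sqrt (N2 s)) / (2 * sqrt (N2 s + \<epsilon>))"
    proof -
      have e3: "K1 * thr^2 * (sqrt (real m) * thr) = K1 * thr^3 * sqrt (real m)"
        by (simp add: power_def mult_ac)
      have "(\<Sum>k=1..m. 2 * w s k i * (- Dw s k)) \<le> 2 * (K1 * thr^3 * sqrt (real m)) * sqrt (N2 s)"
        unfolding eqs using gb unfolding e3 by linarith
      then show ?thesis unfolding G'_def by (rule divide_right_mono) (use pos in simp)
    qed
    also have "\<dots> = (K1 * thr^3 * sqrt (real m)) * (sqrt (N2 s) / sqrt (N2 s + \<epsilon>))" by simp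
    also have "\<dots> \<le> (K1 * thr^3 * sqrt (real m)) * 1"
      by (rule mult_left_mono) (use sq pos K1 thr in auto)
    finally show "G' s \<le> K1 * thr^3 * sqrt (real m)" by simp
  qed
  have "G t \<le> G 0 + K1 * thr^3 * sqrt (real m) * t"
    by (rule ode_bound[OF dG t(2) t(1) bG])
  moreover have "sqrt (N2 t) \<le> G t" unfolding G_def using eps by simp
  ultimately show ?thesis unfolding G_def N2_def by linarith
qed

end



lemma caseA:
  fixes x \<alpha> K1 :: real
  assumes \<alpha>: "1/2 < \<alpha>" and x: "x \<ge> 1" and L0: "ln x \<ge> 0"
    and E1: "ln x ^ 2 \<le> x powr (\<alpha> - 1/2)" and E2: "ln x ^ 4 \<le> x" and K1: "K1 \<ge> 0"
  shows "x * (x powr (-(\<alpha>/2 + 1/4)) * ln x)^2 \<le> 1"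
    and "(2*\<alpha> - 1)/4 * ln x * (K1 * (x powr (-(\<alpha>/2 + 1/4)) * ln x)^3 * sqrt x)
          \<le> K1 * ((2*\<alpha>-1)/4) * (1 / x powr ((2*\<alpha>-1)/2))"
proof -
  define p where "p = -(\<alpha>/2 + 1/4)"
  have x0: "x > 0" using x by simp
  have P2: "(x powr p)^2 = x powr (2*p)" using powr_power[of x p 2] x0 by simp
  have P3: "(x powr p)^3 = x powr (3*p)" using powr_power[of x p 3] x0 by simp
  have "x * (x powr p * ln x)^2 = (x * x powr (2*p)) * ln x ^ 2" by (simp add: power_mult_distrib P2)
  also have "x * x powr (2*p) = x powr (1/2 - \<alpha>)" using powr_mult_base[of x "2*p"] x0 unfolding p_def by simp
  also have "x powr (1/2 - \<alpha>) * ln x ^ 2 \<le> x powr (1/2 - \<alpha>) * x powr (\<alpha> - 1/2)"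
    by (rule mult_left_mono[OF E1]) simp
  also have "\<dots> = 1" using x0 by (simp flip: powr_add)
  finally show "x * (x powr (-(\<alpha>/2 + 1/4)) * ln x)^2 \<le> 1" unfolding p_def .
  have eqL: "(2*\<alpha> - 1)/4 * ln x * (K1 * (x powr p * ln x)^3 * sqrt x)
      = ((2*\<alpha> - 1)/4 * K1) * (ln x ^ 4 * (x powr (3*p) * x powr (1/2)))"
  proof -
    have h4: "ln x ^ 4 = ln x * ln x ^ 3" by (simp add: eval_nat_numeral)
    have hs: "sqrt x = x powr (1/2)" using x0 by (simp add: powr_half_sqrt)
    show ?thesis unfolding power_mult_distrib P3 hs h4 by (simp only: mult_ac)
  qed
  have "ln x ^ 4 * (x powr (3*p) * x powr (1/2)) = ln x ^ 4 * x powr (3*p + 1/2)" by (simp add: powr_add)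
  also have "ln x ^ 4 * x powr (3*p + 1/2) \<le> x powr 1 * x powr (3*p + 1/2)"
    by (rule mult_right_mono) (use E2 x0 in auto)
  also have "x powr 1 * x powr (3*p + 1/2) = x powr (1 + (3*p + 1/2))" by (rule powr_add[symmetric])
  also have "x powr (1 + (3*p + 1/2)) \<le> x powr (-((2*\<alpha>-1)/2))"
    by (rule powr_mono) (use \<alpha> x in \<open>simp_all add: p_def field_simps\<close>)
  also have "x powr (-((2*\<alpha>-1)/2)) = 1 / x powr ((2*\<alpha>-1)/2)" by (rule powr_minus_divide)
  finally have inner: "ln x ^ 4 * (x powr (3*p) * x powr (1/2)) \<le> 1 / x powr ((2*\<alpha>-1)/2)" .
  have C0: "(2*\<alpha> - 1)/4 * K1 \<ge> 0" using \<alpha> K1 by simp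
  show "(2*\<alpha> - 1)/4 * ln x * (K1 * (x powr (-(\<alpha>/2 + 1/4)) * ln x)^3 * sqrt x)
          \<le> K1 * ((2*\<alpha>-1)/4) * (1 / x powr ((2*\<alpha>-1)/2))"
    using mult_left_mono[OF inner C0] unfolding p_def[symmetric] eqL by (simp add: mult_ac)
qed

lemma caseB:
  fixes x \<alpha> K1 :: real
  assumes \<alpha>: "\<alpha> > 3/2" and x: "x \<ge> 1" and L1: "ln x \<ge> 1"
    and E3: "ln x ^ 2 \<le> x" and K1: "K1 \<ge> 0"
  shows "x * (x powr (-1) * ln x)^2 \<le> 1"
    and "(\<alpha> - 1) * ln x * (K1 * (x powr (-1) * ln x)^3 * sqrt x)
          \<le> K1 * (\<alpha> - 1) * (ln x ^ 5 / x powr (5/2))"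
proof -
  have x0: "x > 0" using x by simp
  have "x * (x powr (-1) * ln x)^2 = ln x ^ 2 / x" using x0 by (simp add: powr_minus_divide power2_eq_square field_simps)
  also have "\<dots> \<le> 1" using E3 x0 by simp
  finally show "x * (x powr (-1) * ln x)^2 \<le> 1" .
  have xs: "x powr (5/2) = x^3 / sqrt x"
  proof -
    have "x powr (5/2) = x powr (3 - 1/2)" by simp
    also have "\<dots> = x powr 3 / x powr (1/2)" by (rule powr_diff)
    also have "\<dots> = x^3 / sqrt x"
    proof -
      have a: "x powr (3::real) = x^3" using powr_realpow[of x 3] x0 by simp
      have b: "x powr (1/2::real) = sqrt x" using x0 by (simp add: powr_half_sqrt)
      show ?thesis by (simp only: a b)
    qed
    finally show ?thesis .
  qed
  have "(\<alpha> - 1) * ln x * (K1 * (x powr (-1) * ln x)^3 * sqrt x) = K1 * (\<alpha> - 1) * (ln x ^ 4 / x powr (5/2))"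
    unfolding xs using x0 by (simp add: powr_minus_divide power_def field_simps)
  also have "\<dots> \<le> K1 * (\<alpha> - 1) * (ln x ^ 5 / x powr (5/2))"
  proof (rule mult_left_mono)
    have "ln x ^ 4 \<le> ln x ^ 5" using L1 by (simp add: power_increasing)
    then show "ln x ^ 4 / x powr (5/2) \<le> ln x ^ 5 / x powr (5/2)" by (simp add: divide_right_mono)
  qed (use K1 \<alpha> in simp)
  finally show "(\<alpha> - 1) * ln x * (K1 * (x powr (-1) * ln x)^3 * sqrt x)
          \<le> K1 * (\<alpha> - 1) * (ln x ^ 5 / x powr (5/2))" .
qed


theorem proposition1:
  fixes \<rho> f :: "real^'n::finite \<Rightarrow> real"
    and \<sigma> \<sigma>1 \<sigma>2 \<sigma>3 :: "real \<Rightarrow> real"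
    and CL \<alpha> :: real and j0 :: 'n
  assumes d2: "CARD('n) \<ge> 2"
    and alpha: "\<alpha> > 1/2"
    and rho_meas: "\<rho> \<in> borel_measurable lborel"
    and rho_nonneg: "\<forall>x. \<rho> x \<ge> 0"
    and rho_int: "integrable lborel \<rho>"
    and rho_prob: "(\<integral>x. \<rho> x \<partial>lborel) = 1"
    and rho_supp: "compact (closure {x. \<rho> x \<noteq> 0})"
    and rho_var: "\<forall>i. (\<integral>x. (x $ i)^2 * \<rho> x \<partial>lborel) = 1"
    and rho_cov: "\<forall>i j. i \<noteq> j \<longrightarrow> (\<integral>x. x $ i * x $ j * \<rho> x \<partial>lborel) = 0"
    and f_meas: "f \<in> borel_measurable lborel"
    and f_bdd: "bounded (f ` closure {x. \<rho> x \<noteq> 0})"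
    and f_corr: "\<forall>i. (\<integral>x. f x * x $ i * \<rho> x \<partial>lborel) = (if i = j0 then 1 else 0)"
    and s1: "\<forall>x. (\<sigma> has_real_derivative \<sigma>1 x) (at x)"
    and s2: "\<forall>x. (\<sigma>1 has_real_derivative \<sigma>2 x) (at x)"
    and s3: "\<forall>x. (\<sigma>2 has_real_derivative \<sigma>3 x) (at x)"
    and s0: "\<sigma> 0 = 0" "\<sigma>1 0 = 1" "\<sigma>2 0 = 0"
    and sL: "\<forall>x. \<bar>\<sigma>3 x\<bar> \<le> CL"
  shows "\<forall>\<delta>. 0 < \<delta> \<and> \<delta> < 1 \<longrightarrow>
    (\<exists>M::nat. \<exists>C::real. \<forall>m\<ge>M.
      \<exists>E\<in>sets (init_measure m \<alpha> :: ((nat \<Rightarrow> real) \<times> (nat \<Rightarrow> 'n \<Rightarrow> real)) measure).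
        measure (init_measure m \<alpha>) E \<ge> 1 - \<delta> \<and>
        (\<forall>\<theta>0\<in>E. \<forall>T a w.
           grad_flow \<sigma> \<rho> f m T a w \<and> (\<forall>k\<in>{1..m}. a 0 k = fst \<theta>0 k \<and> w 0 k = snd \<theta>0 k)
           \<longrightarrow> (\<forall>t i. 0 \<le> t \<and> t < T \<and> ereal t \<le> min (ereal (Tp \<alpha> m)) (T1 \<alpha> m j0 T a w)
                     \<and> i \<noteq> j0 \<longrightarrow>
                 sqrt (\<Sum>k=1..m. (w t k i)^2)
                   \<le> C * max (1 / real m powr ((2*\<alpha> - 1)/2)) ((ln (real m))^5 / real m powr (5/2)))))"
  proof -
  interpret nsetup \<sigma> \<sigma>1 \<sigma>2 \<sigma>3 CL \<rho> f j0
    by unfold_locales (use assms in auto)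
  obtain K1 where K1: "K1 \<ge> 0" and K1P: "\<forall>m a w q i. i \<noteq> j0 \<longrightarrow> q \<ge> 0 \<longrightarrow> q \<le> 1 \<longrightarrow> real m * q^2 \<le> 1 \<longrightarrow>
     (\<forall>l\<in>{1..m}. \<bar>a l\<bar> \<le> q \<and> (\<forall>j. \<bar>w l j\<bar> \<le> q)) \<longrightarrow>
     -(K1 * q^2 * (sqrt (real m) * q) * sqrt (\<Sum>k=1..m. (w k i)^2)) \<le>
       (\<Sum>k=1..m. w k i * (\<integral>x. (net \<sigma> m a w x - f x) * (a k * \<sigma>1 (dotp (w k) x) * x $ i) * \<rho> x \<partial>lborel))"
    using grad_bound by blast
  show ?thesis
  proof (intro allI impI)
    fix \<delta> :: real assume \<delta>: "0 < \<delta> \<and> \<delta> < 1"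
    define d where "d = real CARD('n)"
    have ev1: "eventually (\<lambda>x::real. 1 \<le> x) at_top" by real_asymp
    have ev2: "eventually (\<lambda>x::real. 1 \<le> ln x) at_top" by real_asymp
    have ev3: "eventually (\<lambda>x::real. ln x ^ 2 \<le> x powr (\<alpha> - 1/2)) at_top" using alpha by real_asymp
    have ev4: "eventually (\<lambda>x::real. ln x ^ 4 \<le> x) at_top" by real_asymp
    have ev5: "eventually (\<lambda>x::real. ln x ^ 2 \<le> x) at_top" by real_asymp
    have "eventually (\<lambda>x::real. 1 \<le> x \<and> 1 \<le> ln x \<and> ln x ^ 2 \<le> x powr (\<alpha> - 1/2) \<and> ln x ^ 4 \<le> x \<and> ln x ^ 2 \<le> x) at_top"
      by (intro eventually_conj ev1 ev2 ev3 ev4 ev5)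
    then have "eventually (\<lambda>m::nat. 1 \<le> real m \<and> 1 \<le> ln (real m) \<and> ln (real m) ^ 2 \<le> real m powr (\<alpha> - 1/2)
        \<and> ln (real m) ^ 4 \<le> real m \<and> ln (real m) ^ 2 \<le> real m) sequentially"
      by (rule eventually_compose_filterlim[OF _ filterlim_real_sequentially])
    then obtain M where M: "\<And>m. m \<ge> M \<Longrightarrow> 1 \<le> real m \<and> 1 \<le> ln (real m) \<and> ln (real m) ^ 2 \<le> real m powr (\<alpha> - 1/2)
        \<and> ln (real m) ^ 4 \<le> real m \<and> ln (real m) ^ 2 \<le> real m"
      unfolding eventually_sequentially by blast
    define C where "C = sqrt (d / \<delta> + 1) + K1 * \<alpha>"
    show "\<exists>M::nat. \<exists>C::real. \<forall>m\<ge>M.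
      \<exists>E\<in>sets (init_measure m \<alpha> :: ((nat \<Rightarrow> real) \<times> (nat \<Rightarrow> 'n \<Rightarrow> real)) measure).
        measure (init_measure m \<alpha>) E \<ge> 1 - \<delta> \<and>
        (\<forall>\<theta>0\<in>E. \<forall>T a w.
           grad_flow \<sigma> \<rho> f m T a w \<and> (\<forall>k\<in>{1..m}. a 0 k = fst \<theta>0 k \<and> w 0 k = snd \<theta>0 k)
           \<longrightarrow> (\<forall>t i. 0 \<le> t \<and> t < T \<and> ereal t \<le> min (ereal (Tp \<alpha> m)) (T1 \<alpha> m j0 T a w)
                     \<and> i \<noteq> j0 \<longrightarrow>
                 sqrt (\<Sum>k=1..m. (w t k i)^2)
                   \<le> C * max (1 / real m powr ((2*\<alpha> - 1)/2)) ((ln (real m))^5 / real m powr (5/2))))"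
    proof (intro exI[of _ M] exI[of _ C] allI impI)
      fix m :: nat assume mM: "M \<le> m"
      note Mm = M[OF mM]
      have m1: "m \<ge> 1" using Mm by simp
      have L1: "ln (real m) \<ge> 1" using Mm by simp
      obtain E where Es: "E \<in> sets (init_measure m \<alpha> :: ((nat \<Rightarrow> real) \<times> (nat \<Rightarrow> 'n \<Rightarrow> real)) measure)"
        and mE: "measure (init_measure m \<alpha> :: ((nat \<Rightarrow> real) \<times> (nat \<Rightarrow> 'n \<Rightarrow> real)) measure) E \<ge> 1 - \<delta>"
        and EB: "\<forall>\<theta>\<in>E. \<forall>i. (\<Sum>k=1..m. (snd \<theta> k i)^2) \<le> real CARD('n) / \<delta> * real m * (real m powr (-\<alpha>))^2"
        using init_event[OF m1, of \<delta> \<alpha>] \<delta> by blast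
      define tg1 where "tg1 = 1 / real m powr ((2*\<alpha> - 1)/2)"
      define tg2 where "tg2 = (ln (real m))^5 / real m powr (5/2)"
      have tg10: "tg1 > 0" unfolding tg1_def using m1 by simp
      have tg20: "tg2 \<ge> 0" unfolding tg2_def using L1 by simp
      have sq1: "real m * (real m powr (-\<alpha>))^2 = tg1^2"
      proof -
        have x0: "real m > 0" using m1 by simp
        have "real m * (real m powr (-\<alpha>))^2 = real m powr (1 + 2 * (-\<alpha>))"
          using powr_power[of "real m" "-\<alpha>" 2] x0 powr_mult_base[of "real m" "2*(-\<alpha>)"] by simp
        also have "\<dots> = (real m powr (-((2*\<alpha> - 1)/2)))^2"
        proof -
          have e: "1 + 2 * (-\<alpha>) = real 2 * (-((2*\<alpha> - 1)/2))" by (simp add: field_simps)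
          show ?thesis unfolding e by (rule powr_power[symmetric]) (use x0 in simp)
        qed
        also have "real m powr (-((2*\<alpha> - 1)/2)) = tg1" unfolding tg1_def by (rule powr_minus_divide)
        finally show ?thesis .
      qed
      define thr where "thr = real m powr (- alpha1 \<alpha>) * ln (real m)"
      have thr0: "thr \<ge> 0" unfolding thr_def using L1 by simp
      have mthr: "real m * thr^2 \<le> 1 \<and> Tp \<alpha> m * (K1 * thr^3 * sqrt (real m)) \<le> K1 * \<alpha> * max tg1 tg2"
      proof (cases "\<alpha> \<le> 3/2")
        case True
        have a1: "alpha1 \<alpha> = \<alpha>/2 + 1/4" "Tp \<alpha> m = (2*\<alpha> - 1)/4 * ln (real m)"
          unfolding alpha1_def Tp_def using True by auto
        have c: "real m * thr^2 \<le> 1" "(2*\<alpha> - 1)/4 * ln (real m) * (K1 * thr^3 * sqrt (real m)) \<le> K1 * ((2*\<alpha>-1)/4) * tg1"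
          unfolding thr_def a1 tg1_def using caseA[of \<alpha> "real m" K1] alpha Mm K1 by auto
        have h1: "K1 * ((2*\<alpha>-1)/4) * tg1 \<le> K1 * \<alpha> * max tg1 tg2"
          by (intro mult_mono) (use K1 alpha tg10 in auto)
        have h2: "Tp \<alpha> m * (K1 * thr^3 * sqrt (real m)) \<le> K1 * ((2*\<alpha>-1)/4) * tg1"
          unfolding a1(2) by (rule c(2))
        show ?thesis using c(1) h1 h2 by linarith
      next
        case False
        have a1: "alpha1 \<alpha> = 1" "Tp \<alpha> m = (\<alpha> - 1) * ln (real m)"
          unfolding alpha1_def Tp_def using False by auto
        have c: "real m * thr^2 \<le> 1" "(\<alpha> - 1) * ln (real m) * (K1 * thr^3 * sqrt (real m)) \<le> K1 * (\<alpha> - 1) * tg2"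
          unfolding thr_def a1 tg2_def using caseB[of \<alpha> "real m" K1] False Mm K1 by auto
        have h1: "K1 * (\<alpha> - 1) * tg2 \<le> K1 * \<alpha> * max tg1 tg2"
          by (intro mult_mono) (use K1 False tg20 in auto)
        have h2: "Tp \<alpha> m * (K1 * thr^3 * sqrt (real m)) \<le> K1 * (\<alpha> - 1) * tg2"
          unfolding a1(2) by (rule c(2))
        show ?thesis using c(1) h1 h2 by linarith
      qed
      have thr1: "thr \<le> 1"
      proof -
        have "thr^2 \<le> real m * thr^2" using m1 by (simp add: mult_le_cancel_right1)
        then have "thr^2 \<le> 1" using mthr by simp
        then show ?thesis using thr0 by (simp add: power_le_one_iff abs_le_square_iff[of thr 1, symmetric])
      qed
      show "\<exists>E\<in>sets (init_measure m \<alpha> :: ((nat \<Rightarrow> real) \<times> (nat \<Rightarrow> 'n \<Rightarrow> real)) measure).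
        measure (init_measure m \<alpha>) E \<ge> 1 - \<delta> \<and>
        (\<forall>\<theta>0\<in>E. \<forall>T a w.
           grad_flow \<sigma> \<rho> f m T a w \<and> (\<forall>k\<in>{1..m}. a 0 k = fst \<theta>0 k \<and> w 0 k = snd \<theta>0 k)
           \<longrightarrow> (\<forall>t i. 0 \<le> t \<and> t < T \<and> ereal t \<le> min (ereal (Tp \<alpha> m)) (T1 \<alpha> m j0 T a w)
                     \<and> i \<noteq> j0 \<longrightarrow>
                 sqrt (\<Sum>k=1..m. (w t k i)^2)
                   \<le> C * max (1 / real m powr ((2*\<alpha> - 1)/2)) ((ln (real m))^5 / real m powr (5/2))))"
      proof (rule bexI[OF _ Es], intro conjI mE ballI allI impI)
        fix \<theta>0 T a w t i
        assume gfi: "grad_flow \<sigma> \<rho> f m T a w \<and> (\<forall>k\<in>{1..m}. a 0 k = fst \<theta>0 k \<and> w 0 k = snd \<theta>0 k)"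
          and \<theta>E: "\<theta>0 \<in> E"
          and ti: "0 \<le> t \<and> t < T \<and> ereal t \<le> min (ereal (Tp \<alpha> m)) (T1 \<alpha> m j0 T a w) \<and> i \<noteq> j0"
        have gf: "grad_flow \<sigma> \<rho> f m T (a::real \<Rightarrow> nat \<Rightarrow> real) w" using gfi by blast
        have tTp: "t \<le> Tp \<alpha> m" using ti by simp
        have tT1: "ereal t \<le> T1 \<alpha> m j0 T a w" using ti by simp
        have below: "\<And>s. 0 \<le> s \<Longrightarrow> s < t \<Longrightarrow> qmax m (a s) (w s) < thr"
        proof (rule ccontr)
          fix s assume s: "0 \<le> s" "s < t" and nb: "\<not> qmax m (a s) (w s) < thr"
          then have "s \<in> {t. 0 \<le> t \<and> t < T \<and>
              (qmax m (a t) (w t) \<ge> real m powr (- alpha1 \<alpha>) * ln (real m)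
               \<or> rmax m j0 a w t \<ge> real m powr (- gamma1 \<alpha>) * (ln (real m))^3)}"
            using ti unfolding thr_def by auto
          then have "T1 \<alpha> m j0 T a w \<le> ereal s" unfolding T1_def by (intro Inf_lower imageI)
          with tT1 have "ereal t \<le> ereal s" by (rule order.trans)
          then show False using s by simp
        qed
        define \<epsilon> where "\<epsilon> = tg1^2"
        have eps: "\<epsilon> > 0" unfolding \<epsilon>_def using tg10 by simp
        have tr: "sqrt (\<Sum>k=1..m. (w t k i)^2) \<le> sqrt ((\<Sum>k=1..m. (w 0 k i)^2) + \<epsilon>) + K1 * thr^3 * sqrt (real m) * t"
          by (rule traj[OF K1 K1P gf _ thr0 thr1 _ _ _ below eps]) (use ti mthr in auto)
        have N0: "(\<Sum>k=1..m. (w 0 k i)^2) \<le> d / \<delta> * tg1^2"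
        proof -
          have "(\<Sum>k=1..m. (w 0 k i)^2) = (\<Sum>k=1..m. (snd \<theta>0 k i)^2)" using gfi by (intro sum.cong refl) auto
          also have "\<dots> \<le> real CARD('n) / \<delta> * real m * (real m powr (-\<alpha>))^2" using EB \<theta>E by blast
          also have "\<dots> = d / \<delta> * tg1^2" unfolding d_def using sq1 by (simp add: mult.assoc)
          finally show ?thesis .
        qed
        have s1: "sqrt ((\<Sum>k=1..m. (w 0 k i)^2) + \<epsilon>) \<le> sqrt (d / \<delta> + 1) * tg1"
        proof -
          have "sqrt ((\<Sum>k=1..m. (w 0 k i)^2) + \<epsilon>) \<le> sqrt ((d / \<delta> + 1) * tg1^2)"
            using N0 unfolding \<epsilon>_def by (simp add: algebra_simps)
          also have "\<dots> = sqrt (d / \<delta> + 1) * tg1" using tg10 by (simp add: real_sqrt_mult)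
          finally show ?thesis .
        qed
        have s2: "K1 * thr^3 * sqrt (real m) * t \<le> K1 * \<alpha> * max tg1 tg2"
        proof -
          have "K1 * thr^3 * sqrt (real m) * t \<le> K1 * thr^3 * sqrt (real m) * Tp \<alpha> m"
            by (rule mult_left_mono[OF tTp]) (use K1 thr0 in simp)
          then show ?thesis using mthr by (simp add: mult_ac)
        qed
        have "sqrt (d / \<delta> + 1) * tg1 \<le> sqrt (d / \<delta> + 1) * max tg1 tg2" by (rule mult_left_mono) (use \<delta> in \<open>auto simp: d_def\<close>)
        then have "sqrt (\<Sum>k=1..m. (w t k i)^2) \<le> C * max tg1 tg2"
          using tr s1 s2 unfolding C_def by (simp add: algebra_simps)
        then show "sqrt (\<Sum>k=1..m. (w t k i)^2)
                   \<le> C * max (1 / real m powr ((2*\<alpha> - 1)/2)) ((ln (real m))^5 / real m powr (5/2))"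
          unfolding tg1_def tg2_def .
      qed
    qed
  qed
qed

end
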